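(* For all integers $n,d,k,p\ge0$, $$P_p(n,\omega^d\cdot k)=\begin{cases}0 & d=0,\ n>k\\ 1 & n=0,\ p=0\\ 0 & n=0,\ p\ge1\\ \binom{k}{n} & d=0,\ 1\le n\le k,\ p=0\\ 0 & d=0,\ 1\le n\le k,\ p\ge1\\ k^n & d=1,\ n\ge1,\ n=p\\ 0 & d=1,\ n\ge1,\ n\ne p\\ 0 & d\ge2,\ n\ge1,\ p=0\\ \displaystyle k\sum_{j=1}^{n}\sum_{i=0}^{p-1}\binom{p-1}{i}P_i(j,\omega^{d-1})\,P_{p-1-i}(n-j,\omega^d\cdot k) & d\ge2,\ n\ge1,\ p\ge1.\end{cases}$$
   Context: Fix integers $n,d,k\ge0$. Every $\beta<\omega^d\cdot k$ is uniquely written $\omega^d b+\omega^{d-1}a_{d-1}+\cdots+a_0$ with $0\le b<k$, $a_j\in\mathbb{N}$. A coloring rule (CR) on $\binom{\omega^d\cdot k}{n}$ is a pair $(\mathcal{Y},\preceq)$ with $\mathcal{Y}:\{1,\dots,n\}\to\{0,\dots,k-1\}$ and $\preceq$ a total preorder on $I=\{(i,j):1\le i\le n,0\le j<d\}$ (write $\equiv$ for the induced equivalence and $\prec$ for the strict part) such that: (1) if $d\ge1$, $(i,0)\prec(i',0)$ for $i<i'$; if $d=0$, $\mathcal{Y}(i)<\mathcal{Y}(i')$ for $i<i'$; (2) $(i,j)\equiv(i',j)$ for some $j$ implies $\mathcal{Y}(i)=\mathcal{Y}(i')$; (3) $(i,j)\prec(i,j')$ for $j>j'$; (4) $(i,j)\equiv(i',j')$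 implies $j=j'$; (5) for $j>0$, $(i,j)\not\equiv(i',j)$ implies $(i,j-1)\not\equiv(i',j-1)$. The size of a CR is the number of $\equiv$-classes of $I$. $P_p(n,\omega^d\cdot k)$ is the number of CRs of size $p$ on $\binom{\omega^d\cdot k}{n}$, and $P_p(n,\omega^{d})$ means $P_p(n,\omega^{d}\cdot1)$. *)

theory Defs
  imports Main "HOL-Library.FuncSet"
begin

definition CR_I :: "nat \<Rightarrow> nat \<Rightarrow> (nat \<times> nat) set" where
  "CR_I n d = {(i, j). 1 \<le> i \<and> i \<le> n \<and> j < d}"

definition CR_eq :: "(nat \<times> nat) rel \<Rightarrow> nat \<times> nat \<Rightarrow> nat \<times> nat \<Rightarrow> bool" where
  "CR_eq R x y \<longleftrightarrow> (x, y) \<in> R \<and> (y, x) \<in> R"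

definition CR_lt :: "(nat \<times> nat) rel \<Rightarrow> nat \<times> nat \<Rightarrow> nat \<times> nat \<Rightarrow> bool" where
  "CR_lt R x y \<longleftrightarrow> (x, y) \<in> R \<and> (y, x) \<notin> R"

text \<open>A coloring rule (Y, R) on [omega^d * k]^n. Y is an extensional function
  {1..n} -> {0..k-1}; R is a total preorder on I (a relation contained in I x I).\<close>
definition is_CR :: "nat \<Rightarrow> nat \<Rightarrow> nat \<Rightarrow> (nat \<Rightarrow> nat) \<Rightarrow> (nat \<times> nat) rel \<Rightarrow> bool" where
  "is_CR n d k Y R \<longleftrightarrow>
     Y \<in> {1..n} \<rightarrow>\<^sub>E {..<k} \<and>
     R \<subseteq> CR_I n d \<times> CR_I n d \<and> refl_on (CR_I n d) R \<and> trans R \<and> total_on (CR_I n d) R \<and>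
     \<comment> \<open>(1)\<close>
     (d \<ge> 1 \<longrightarrow> (\<forall>i i'. 1 \<le> i \<and> i < i' \<and> i' \<le> n \<longrightarrow> CR_lt R (i, 0) (i', 0))) \<and>
     (d = 0 \<longrightarrow> (\<forall>i i'. 1 \<le> i \<and> i < i' \<and> i' \<le> n \<longrightarrow> Y i < Y i')) \<and>
     \<comment> \<open>(2)\<close>
     (\<forall>i i' j. (i, j) \<in> CR_I n d \<and> (i', j) \<in> CR_I n d \<and> CR_eq R (i, j) (i', j) \<longrightarrow> Y i = Y i') \<and>
     \<comment> \<open>(3)\<close>
     (\<forall>i j j'. (i, j) \<in> CR_I n d \<and> (i, j') \<in> CR_I n d \<and> j > j' \<longrightarrow> CR_lt R (i, j) (i, j')) \<and>
     \<comment> \<open>(4)\<close>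
     (\<forall>i j i' j'. (i, j) \<in> CR_I n d \<and> (i', j') \<in> CR_I n d \<and> CR_eq R (i, j) (i', j') \<longrightarrow> j = j') \<and>
     \<comment> \<open>(5)\<close>
     (\<forall>i i' j. j > 0 \<and> (i, j) \<in> CR_I n d \<and> (i', j) \<in> CR_I n d \<and> \<not> CR_eq R (i, j) (i', j)
        \<longrightarrow> \<not> CR_eq R (i, j - 1) (i', j - 1))"

definition CR_size :: "nat \<Rightarrow> nat \<Rightarrow> (nat \<times> nat) rel \<Rightarrow> nat" where
  "CR_size n d R = card (CR_I n d // {(x, y). CR_eq R x y})"

definition P :: "nat \<Rightarrow> nat \<Rightarrow> nat \<Rightarrow> nat \<Rightarrow> nat" where
  "P p n d k = card {(Y, R). is_CR n d k Y R \<and> CR_size n d R = p}"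

end

theory Submission
  imports Defs
begin


definition idx :: "nat set \<Rightarrow> nat \<Rightarrow> nat" where
  "idx V v = card {w\<in>V. w < v}"

lemma idx_less:
  assumes "finite V" "v \<in> V" "w \<in> V" "v < w"
  shows "idx V v < idx V w"
  unfolding idx_def
  by (rule psubset_card_mono) (use assms in auto)

lemma idx_lt_card:
  assumes "finite V" "v \<in> V"
  shows "idx V v < card V"
  unfolding idx_def
  by (rule psubset_card_mono) (use assms in auto)

lemma idx_inj: "finite V \<Longrightarrow> inj_on (idx V) V"
  by (metis idx_less inj_on_def linorder_neqE_nat less_irrefl)

lemma idx_image:
  assumes "finite V" shows "idx V ` V = {..<card V}"
proof -
  have "idx V ` V \<subseteq> {..<card V}" using idx_lt_card[OF assms] by auto
  moreover have "card (idx V ` V) = card {..<card V}"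
    using card_image[OF idx_inj[OF assms]] by simp
  ultimately show ?thesis by (simp add: card_subset_eq)
qed

definition enum :: "nat set \<Rightarrow> nat \<Rightarrow> nat" where
  "enum V i = the_inv_into V (idx V) i"

lemma enum_in: "finite V \<Longrightarrow> i < card V \<Longrightarrow> enum V i \<in> V"
  unfolding enum_def by (metis idx_image idx_inj lessThan_iff the_inv_into_into subset_refl)

lemma idx_enum: "finite V \<Longrightarrow> i < card V \<Longrightarrow> idx V (enum V i) = i"
  unfolding enum_def by (metis f_the_inv_into_f idx_image idx_inj lessThan_iff)

lemma enum_idx: "finite V \<Longrightarrow> v \<in> V \<Longrightarrow> enum V (idx V v) = v"
  unfolding enum_def by (simp add: idx_inj the_inv_into_f_f)

lemma enum_less:
  assumes "finite V" "i < j" "j < card V"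
  shows "enum V i < enum V j"
proof (rule ccontr)
  assume "\<not> ?thesis"
  then have "enum V j \<le> enum V i" by simp
  moreover have "enum V i \<in> V" "enum V j \<in> V" using assms enum_in by auto
  ultimately have "idx V (enum V j) \<le> idx V (enum V i)"
    using idx_less[OF assms(1), of "enum V j" "enum V i"] by (cases "enum V j = enum V i") auto
  then show False using assms idx_enum by simp
qed

lemma enum_image: "finite V \<Longrightarrow> enum V ` {..<card V} = V"
  using the_inv_into_onto[OF idx_inj, of V] idx_image[of V] unfolding enum_def by simp

lemma idx_of_mono:
  fixes g :: "nat \<Rightarrow> nat"
  assumes mono: "\<And>i j. i < j \<Longrightarrow> j < n \<Longrightarrow> g i < g j"
    and V: "V = g ` {..<n}" and i: "i < n"
  shows "idx V (g i) = i"
proof -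
  have inj: "inj_on g {..<n}"
  proof (rule inj_onI)
    fix x y assume "x \<in> {..<n}" "y \<in> {..<n}" "g x = g y"
    then show "x = y" using mono[of x y] mono[of y x] by (cases x y rule: linorder_cases) auto
  qed
  have "{w\<in>V. w < g i} = g ` {..<i}"
  proof
    show "{w \<in> V. w < g i} \<subseteq> g ` {..<i}"
    proof
      fix w assume "w \<in> {w \<in> V. w < g i}"
      then obtain i' where "i' < n" "w = g i'" "g i' < g i" using V by auto
      then have "i' < i" using mono i by (metis linorder_neqE_nat less_asym')
      then show "w \<in> g ` {..<i}" using \<open>w = g i'\<close> by auto
    qed
    show "g ` {..<i} \<subseteq> {w \<in> V. w < g i}" using V mono i by auto
  qed
  then have "idx V (g i) = card (g ` {..<i})" by (simp add: idx_def)
  also have "\<dots> = i"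
  proof -
    have "inj_on g {..<i}" by (rule inj_on_subset[OF inj]) (use i in auto)
    then show ?thesis by (simp add: card_image)
  qed
  finally show ?thesis .
qed

lemma enum_unique:
  fixes g :: "nat \<Rightarrow> nat"
  assumes mono: "\<And>i j. i < j \<Longrightarrow> j < n \<Longrightarrow> g i < g j"
    and V: "V = g ` {..<n}" and i: "i < n"
  shows "enum V i = g i"
proof -
  have "finite V" "g i \<in> V" using V i by auto
  then have "enum V (idx V (g i)) = g i" by (rule enum_idx)
  then show ?thesis using idx_of_mono[OF assms] by simp
qed

lemma card_mono_image:
  fixes g :: "nat \<Rightarrow> nat"
  assumes mono: "\<And>i j. i < j \<Longrightarrow> j < n \<Longrightarrow> g i < g j"
  shows "card (g ` {..<n}) = n"
proof -
  have inj: "inj_on g {..<n}"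
  proof (rule inj_onI)
    fix x y assume "x \<in> {..<n}" "y \<in> {..<n}" "g x = g y"
    then show "x = y" using mono[of x y] mono[of y x] by (cases x y rule: linorder_cases) auto
  qed
  then show ?thesis by (simp add: card_image)
qed


lemma quot_card:
  "card (Z // {(y,z). y \<in> Z \<and> z \<in> Z \<and> F y = F z}) = card (F ` Z)"
proof -
  let ?r = "{(y,z). y \<in> Z \<and> z \<in> Z \<and> F y = F z}"
  have e: "?r``{x} = {z\<in>Z. F z = F x}" if "x\<in>Z" for x using that by auto
  have "Z // ?r = (\<lambda>x. {z\<in>Z. F z = F x}) ` Z"
    unfolding quotient_def using e by auto
  also have "\<dots> = (\<lambda>v. {z\<in>Z. F z = v}) ` (F ` Z)" by (simp add: image_image)
  finally have "Z // ?r = (\<lambda>v. {z\<in>Z. F z = v}) ` (F ` Z)" .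
  moreover have "inj_on (\<lambda>v. {z\<in>Z. F z = v}) (F ` Z)"
    by (rule inj_onI) auto
  ultimately show ?thesis by (simp add: card_image)
qed

lemma card_image_eqv:
  assumes "\<And>y z. y \<in> Z \<Longrightarrow> z \<in> Z \<Longrightarrow> F y = F z \<longleftrightarrow> G y = G z"
  shows "card (F ` Z) = card (G ` Z)"
proof -
  have "{(y,z). y \<in> Z \<and> z \<in> Z \<and> F y = F z} = {(y,z). y \<in> Z \<and> z \<in> Z \<and> G y = G z}"
    using assms by auto
  then show ?thesis using quot_card[of Z F] quot_card[of Z G] by simp
qed

lemma rank_unique:
  fixes F G :: "'a \<Rightarrow> nat"
  assumes F: "F ` I = {..<q1}" and G: "G ` I = {..<q2}"
    and FG: "\<And>x y. x \<in> I \<Longrightarrow> y \<in> I \<Longrightarrow> F x \<le> F y \<longleftrightarrow> G x \<le> G y"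
    and x: "x \<in> I"
  shows "F x = G x"
proof -
  define Z where "Z = {y\<in>I. F y < F x}"
  have Z2: "Z = {y\<in>I. G y < G x}" unfolding Z_def using FG x by (auto simp: not_le[symmetric])
  have "F ` Z = {..<F x}"
  proof
    show "F ` Z \<subseteq> {..<F x}" unfolding Z_def by auto
    show "{..<F x} \<subseteq> F ` Z"
    proof
      fix v assume v: "v \<in> {..<F x}"
      have "F x < q1" using F x by auto
      then have "v \<in> F ` I" using v F by auto
      then show "v \<in> F ` Z" using v unfolding Z_def by auto
    qed
  qed
  moreover have "G ` Z = {..<G x}"
  proof
    show "G ` Z \<subseteq> {..<G x}" unfolding Z2 by auto
    show "{..<G x} \<subseteq> G ` Z"
    proof
      fix v assume v: "v \<in> {..<G x}"
      have "G x < q2" using G x by auto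
      then have "v \<in> G ` I" using v G by auto
      then show "v \<in> G ` Z" using v unfolding Z2 by auto
    qed
  qed
  moreover have "card (F ` Z) = card (G ` Z)"
  proof (rule card_image_eqv)
    fix y z assume "y \<in> Z" "z \<in> Z"
    then have "y \<in> I" "z \<in> I" unfolding Z_def by auto
    then show "F y = F z \<longleftrightarrow> G y = G z"
      using FG[of y z] FG[of z y] by (auto simp: eq_iff)
  qed
  ultimately show ?thesis by simp
qed

lemma rank_exists:
  assumes fin: "finite I" and sub: "R \<subseteq> I \<times> I" and refl: "refl_on I R" and tr: "trans R"
    and tot: "total_on I R"
  shows "\<exists>F::'a\<Rightarrow>nat. F ` I = {..<card (F ` I)} \<and> (\<forall>x\<in>I. \<forall>y\<in>I. (x,y) \<in> R \<longleftrightarrow> F x \<le> F y)"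
proof -
  define g where "g x = card {y\<in>I. (y,x) \<in> R}" for x
  have g_mono: "(x,y) \<in> R \<longleftrightarrow> g x \<le> g y" if "x \<in> I" "y \<in> I" for x y
  proof
    assume "(x,y) \<in> R"
    then have "{z\<in>I. (z,x) \<in> R} \<subseteq> {z\<in>I. (z,y) \<in> R}" using tr by (auto dest: transD)
    then show "g x \<le> g y" unfolding g_def by (rule card_mono[rotated]) (use fin in auto)
  next
    assume le: "g x \<le> g y"
    show "(x,y) \<in> R"
    proof (rule ccontr)
      assume nxy: "(x,y) \<notin> R"
      then have "(y,x) \<in> R" using tot that refl by (metis refl_onD total_on_def)
      then have "{z\<in>I. (z,y) \<in> R} \<subset> {z\<in>I. (z,x) \<in> R}"
        using tr nxy that refl by (auto dest: transD refl_onD)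
      then have "g y < g x" unfolding g_def by (rule psubset_card_mono[rotated]) (use fin in auto)
      then show False using le by simp
    qed
  qed
  define F where "F x = idx (g ` I) (g x)" for x
  have fin2: "finite (g ` I)" using fin by simp
  have FI: "F ` I = {..<card (g ` I)}"
    using idx_image[OF fin2] unfolding F_def by (simp add: image_image[symmetric])
  have "card (F ` I) = card (g ` I)" using FI by simp
  moreover have "(x,y) \<in> R \<longleftrightarrow> F x \<le> F y" if "x \<in> I" "y \<in> I" for x y
  proof -
    have "g x \<le> g y \<longleftrightarrow> F x \<le> F y"
      unfolding F_def using idx_less[OF fin2, of "g x" "g y"] idx_less[OF fin2, of "g y" "g x"] that
      by (cases "g x" "g y" rule: linorder_cases) auto
    then show ?thesis using g_mono that by simp
  qed
  ultimately show ?thesis using FI by (intro exI[of _ F]) simp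
qed

definition relF :: "('a \<Rightarrow> nat) \<Rightarrow> 'a set \<Rightarrow> 'a rel" where
  "relF F I = {(x,y). x \<in> I \<and> y \<in> I \<and> F x \<le> F y}"

lemma relF_eq: "CR_eq (relF F I) x y \<longleftrightarrow> x \<in> I \<and> y \<in> I \<and> F x = F y"
  unfolding CR_eq_def relF_def by auto

lemma relF_lt: "CR_lt (relF F I) x y \<longleftrightarrow> x \<in> I \<and> y \<in> I \<and> F x < F y"
  unfolding CR_lt_def relF_def by auto

lemma relF_props: "relF F I \<subseteq> I \<times> I" "refl_on I (relF F I)" "trans (relF F I)" "total_on I (relF F I)"
  unfolding relF_def refl_on_def trans_def total_on_def by auto

lemma relF_quot: "card (I // {(x,y). CR_eq (relF F I) x y}) = card (F ` I)"
  unfolding relF_eq using quot_card[of I F] by simp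


definition T :: "nat \<Rightarrow> nat \<Rightarrow> nat \<Rightarrow> nat set \<Rightarrow> (nat set \<times> (nat \<Rightarrow> nat) \<times> (nat \<times> nat \<Rightarrow> nat)) set" where
 "T n d k Rk = {(L,Y,f). L \<subseteq> Rk \<and> card L = n \<and> Y \<in> L \<rightarrow>\<^sub>E {..<k} \<and> f \<in> (L \<times> {..<d}) \<rightarrow>\<^sub>E Rk
   \<and> f ` (L \<times> {..<d}) = Rk \<and> (\<forall>l\<in>L. f (l,0) = l) \<and>
   (\<forall>l\<in>L. \<forall>l'\<in>L. \<forall>j<d. f (l,j) = f (l',j) \<longrightarrow> Y l = Y l') \<and>
   (\<forall>l\<in>L. \<forall>j j'. j' < j \<and> j < d \<longrightarrow> f (l,j) < f (l,j')) \<and>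
   (\<forall>l\<in>L. \<forall>l'\<in>L. \<forall>j<d. \<forall>j'<d. f (l,j) = f (l',j') \<longrightarrow> j = j') \<and>
   (\<forall>l\<in>L. \<forall>l'\<in>L. \<forall>j. 0 < j \<and> j < d \<and> f (l,j-1) = f (l',j-1) \<longrightarrow> f (l,j) = f (l',j))}"

lemma CR_I_mem[simp]: "(i,j) \<in> CR_I n d \<longleftrightarrow> 1 \<le> i \<and> i \<le> n \<and> j < d"
  by (simp add: CR_I_def)

lemma finite_CR_I[simp]: "finite (CR_I n d)"
proof -
  have "CR_I n d \<subseteq> {1..n} \<times> {..<d}" by (auto simp: CR_I_def)
  then show ?thesis by (rule finite_subset) simp
qed

definition CRset :: "nat \<Rightarrow> nat \<Rightarrow> nat \<Rightarrow> nat \<Rightarrow> ((nat \<Rightarrow> nat) \<times> (nat \<times> nat) rel) set" where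
  "CRset p n d k = {(Y, R). is_CR n d k Y R \<and> CR_size n d R = p}"

lemma P_CRset: "P p n d k = card (CRset p n d k)"
  by (simp add: P_def CRset_def)

definition Fb :: "nat set \<Rightarrow> (nat \<times> nat \<Rightarrow> nat) \<Rightarrow> nat \<times> nat \<Rightarrow> nat" where
  "Fb L f = (\<lambda>(i,j). f (enum L (i-1), j))"

definition beta :: "nat \<Rightarrow> nat \<Rightarrow> nat set \<times> (nat \<Rightarrow> nat) \<times> (nat \<times> nat \<Rightarrow> nat) \<Rightarrow> (nat \<Rightarrow> nat) \<times> (nat \<times> nat) rel" where
  "beta n d t = (case t of (L,Y,f) \<Rightarrow> (\<lambda>i\<in>{1..n}. Y (enum L (i-1)), relF (Fb L f) (CR_I n d)))"

lemma Tmem: "(L,Y,f) \<in> T n d k Rk \<longleftrightarrow> L \<subseteq> Rk \<and> card L = n \<and> Y \<in> L \<rightarrow>\<^sub>E {..<k} \<and> f \<in> (L \<times> {..<d}) \<rightarrow>\<^sub>E Rk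
   \<and> f ` (L \<times> {..<d}) = Rk \<and> (\<forall>l\<in>L. f (l,0) = l) \<and>
   (\<forall>l\<in>L. \<forall>l'\<in>L. \<forall>j<d. f (l,j) = f (l',j) \<longrightarrow> Y l = Y l') \<and>
   (\<forall>l\<in>L. \<forall>j j'. j' < j \<and> j < d \<longrightarrow> f (l,j) < f (l,j')) \<and>
   (\<forall>l\<in>L. \<forall>l'\<in>L. \<forall>j<d. \<forall>j'<d. f (l,j) = f (l',j') \<longrightarrow> j = j') \<and>
   (\<forall>l\<in>L. \<forall>l'\<in>L. \<forall>j. 0 < j \<and> j < d \<and> f (l,j-1) = f (l',j-1) \<longrightarrow> f (l,j) = f (l',j))"
  unfolding T_def by simp

lemma TD:
  assumes "(L,Y,f) \<in> T n d k Rk"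
  shows "L \<subseteq> Rk" "card L = n" "Y \<in> L \<rightarrow>\<^sub>E {..<k}" "f \<in> (L \<times> {..<d}) \<rightarrow>\<^sub>E Rk"
   "f ` (L \<times> {..<d}) = Rk" "\<And>l. l\<in>L \<Longrightarrow> f (l,0) = l"
   "\<And>l l' j. l\<in>L \<Longrightarrow> l'\<in>L \<Longrightarrow> j<d \<Longrightarrow> f (l,j) = f (l',j) \<Longrightarrow> Y l = Y l'"
   "\<And>l j j'. l\<in>L \<Longrightarrow> j' < j \<Longrightarrow> j < d \<Longrightarrow> f (l,j) < f (l,j')"
   "\<And>l l' j j'. l\<in>L \<Longrightarrow> l'\<in>L \<Longrightarrow> j<d \<Longrightarrow> j'<d \<Longrightarrow> f (l,j) = f (l',j') \<Longrightarrow> j = j'"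
   "\<And>l l' j. l\<in>L \<Longrightarrow> l'\<in>L \<Longrightarrow> 0 < j \<Longrightarrow> j < d \<Longrightarrow> f (l,j-1) = f (l',j-1) \<Longrightarrow> f (l,j) = f (l',j)"
  using assms unfolding Tmem by (elim conjE; blast)+

lemma enum_row_image:
  assumes "finite L" "card L = n"
  shows "(\<lambda>(i,j). (enum L (i-1), j)) ` CR_I n d = L \<times> {..<d}"
proof
  show "(\<lambda>(i,j). (enum L (i-1), j)) ` CR_I n d \<subseteq> L \<times> {..<d}"
    using enum_in[OF assms(1)] assms(2) by (auto simp: CR_I_def)
  show "L \<times> {..<d} \<subseteq> (\<lambda>(i,j). (enum L (i-1), j)) ` CR_I n d"
  proof
    fix x assume "x \<in> L \<times> {..<d}"
    then obtain l j where x: "x = (l,j)" "l \<in> L" "j < d" by auto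
    have "idx L l < n" using idx_lt_card[OF assms(1) x(2)] assms(2) by simp
    then have "(idx L l + 1, j) \<in> CR_I n d" using x by simp
    have "enum L (idx L l + 1 - 1) = l" using enum_idx[OF assms(1) x(2)] by simp
    then have e: "x = (\<lambda>(i,j). (enum L (i-1), j)) (idx L l + 1, j)"
      using x(1) by simp
    show "x \<in> (\<lambda>(i,j). (enum L (i-1), j)) ` CR_I n d"
      using e \<open>(idx L l + 1, j) \<in> CR_I n d\<close> by (rule image_eqI)
  qed
qed

lemma beta_into:
  assumes d: "d \<ge> 1" and t: "(L,Y,f) \<in> T n d k {..<p}"
  shows "beta n d (L,Y,f) \<in> CRset p n d k"
proof -
  have finL: "finite L" using TD(1)[OF t] finite_subset by blast
  have cL: "card L = n" using TD(2)[OF t] .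
  define e where "e i = enum L (i-1)" for i
  have eL: "e i \<in> L" if "1 \<le> i" "i \<le> n" for i
    unfolding e_def using enum_in[OF finL] that cL by simp
  have emono: "e i < e i'" if "1 \<le> i" "i < i'" "i' \<le> n" for i i'
    unfolding e_def using enum_less[OF finL, of "i-1" "i'-1"] that cL by simp
  define F where "F = Fb L f"
  have Fe: "F (i,j) = f (e i, j)" for i j unfolding F_def Fb_def e_def by simp
  note f0 = TD(6)[OF t] and C2 = TD(7)[OF t] and C3 = TD(8)[OF t] and C4 = TD(9)[OF t] and C5 = TD(10)[OF t]
  have Ybd: "Y l < k" if "l \<in> L" for l using TD(3)[OF t] that by auto
  define R where "R = relF F (CR_I n d)"
  define Y' where "Y' = (\<lambda>i\<in>{1..n}. Y (e i))"
  have b: "beta n d (L,Y,f) = (Y', R)" unfolding beta_def R_def Y'_def F_def e_def by simp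
  have FI: "F ` CR_I n d = f ` (L \<times> {..<d})"
  proof -
    have "F ` CR_I n d = f ` ((\<lambda>(i,j). (enum L (i-1), j)) ` CR_I n d)"
      unfolding F_def Fb_def image_image by (simp add: case_prod_unfold)
    then show ?thesis using enum_row_image[OF finL cL] by simp
  qed
  have size: "CR_size n d R = p"
    unfolding CR_size_def R_def relF_quot FI using TD(5)[OF t] by simp
  have "is_CR n d k Y' R"
    unfolding is_CR_def
  proof (intro conjI allI impI)
    show "Y' \<in> {1..n} \<rightarrow>\<^sub>E {..<k}" unfolding Y'_def using eL Ybd by (auto simp: PiE_iff)
    show "R \<subseteq> CR_I n d \<times> CR_I n d" "refl_on (CR_I n d) R" "trans R" "total_on (CR_I n d) R"
      unfolding R_def using relF_props by auto
    fix i i' assume "1 \<le> i \<and> i < i' \<and> i' \<le> n"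
    then have "e i < e i'" "e i \<in> L" "e i' \<in> L" using emono eL by auto
    then have "f (e i, 0) < f (e i', 0)" using f0 by simp
    then show "CR_lt R (i,0) (i',0)" unfolding R_def relF_lt Fe using d \<open>1 \<le> i \<and> i < i' \<and> i' \<le> n\<close> by auto
  next
    fix i i' assume "d = 0" then show "Y' i < Y' i'" using d by simp
  next
    fix i i' j assume a: "(i, j) \<in> CR_I n d \<and> (i', j) \<in> CR_I n d \<and> CR_eq R (i, j) (i', j)"
    then have "e i \<in> L" "e i' \<in> L" "j < d" "f (e i, j) = f (e i', j)"
      unfolding R_def relF_eq Fe using eL by auto
    then have "Y (e i) = Y (e i')" using C2 by blast
    then show "Y' i = Y' i'" unfolding Y'_def using a by auto
  next
    fix i j j' assume a: "(i, j) \<in> CR_I n d \<and> (i, j') \<in> CR_I n d \<and> j' < j"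
    then have "e i \<in> L" "j' < j" "j < d" using eL by auto
    then have "f (e i, j) < f (e i, j')" using C3 by blast
    then show "CR_lt R (i, j) (i, j')" unfolding R_def relF_lt Fe using a by auto
  next
    fix i j i' j' assume a: "(i, j) \<in> CR_I n d \<and> (i', j') \<in> CR_I n d \<and> CR_eq R (i, j) (i', j')"
    then have "f (e i, j) = f (e i', j')" "e i \<in> L" "e i' \<in> L" "j < d" "j' < d"
      unfolding R_def relF_eq Fe using eL by auto
    then show "j = j'" using C4 by blast
  next
    fix i i' j assume a: "0 < j \<and> (i, j) \<in> CR_I n d \<and> (i', j) \<in> CR_I n d \<and> \<not> CR_eq R (i, j) (i', j)"
    then have "e i \<in> L" "e i' \<in> L" "0 < j" "j < d" "f (e i, j) \<noteq> f (e i', j)"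
      unfolding R_def relF_eq Fe using eL by auto
    then have "f (e i, j-1) \<noteq> f (e i', j-1)" using C5 by blast
    then show "\<not> CR_eq R (i, j - 1) (i', j - 1)" unfolding R_def relF_eq Fe by auto
  qed
  then show ?thesis using b size unfolding CRset_def by simp
qed


lemma Fb_image:
  assumes "finite L" "card L = n"
  shows "Fb L f ` CR_I n d = f ` (L \<times> {..<d})"
proof -
  have "Fb L f ` CR_I n d = f ` ((\<lambda>(i,j). (enum L (i-1), j)) ` CR_I n d)"
    unfolding Fb_def image_image by (simp add: case_prod_unfold)
  then show ?thesis using enum_row_image[OF assms] by simp
qed

lemma relF_le: "x \<in> I \<Longrightarrow> y \<in> I \<Longrightarrow> (x,y) \<in> relF F I \<longleftrightarrow> F x \<le> F y"
  by (simp add: relF_def)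

lemma beta_inj:
  assumes d: "d \<ge> 1" and t1: "(L1,Y1,f1) \<in> T n d k {..<p}" and t2: "(L2,Y2,f2) \<in> T n d k {..<p}"
    and eq: "beta n d (L1,Y1,f1) = beta n d (L2,Y2,f2)"
  shows "(L1,Y1,f1) = (L2,Y2,f2)"
proof -
  have fin1: "finite L1" using TD(1)[OF t1] finite_subset by blast
  have fin2: "finite L2" using TD(1)[OF t2] finite_subset by blast
  have c1: "card L1 = n" using TD(2)[OF t1] .
  have c2: "card L2 = n" using TD(2)[OF t2] .
  define F1 where "F1 = Fb L1 f1"
  define F2 where "F2 = Fb L2 f2"
  have R: "relF F1 (CR_I n d) = relF F2 (CR_I n d)"
    using eq unfolding beta_def F1_def F2_def by simp
  have Yeq: "(\<lambda>i\<in>{1..n}. Y1 (enum L1 (i-1))) = (\<lambda>i\<in>{1..n}. Y2 (enum L2 (i-1)))"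
    using eq unfolding beta_def by simp
  have I1: "F1 ` CR_I n d = {..<p}" unfolding F1_def Fb_image[OF fin1 c1] using TD(5)[OF t1] .
  have I2: "F2 ` CR_I n d = {..<p}" unfolding F2_def Fb_image[OF fin2 c2] using TD(5)[OF t2] .
  have FF: "F1 x = F2 x" if "x \<in> CR_I n d" for x
  proof (rule rank_unique[OF I1 I2 _ that])
    fix x y assume "x \<in> CR_I n d" "y \<in> CR_I n d"
    then show "F1 x \<le> F1 y \<longleftrightarrow> F2 x \<le> F2 y" using R relF_le by metis
  qed
  have ee: "enum L1 i = enum L2 i" if "i < n" for i
  proof -
    have "(i+1, 0) \<in> CR_I n d" using that d by simp
    then have "F1 (i+1,0) = F2 (i+1,0)" by (rule FF)
    moreover have "F1 (i+1,0) = enum L1 i" unfolding F1_def Fb_def using TD(6)[OF t1] enum_in[OF fin1] that c1 by simp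
    moreover have "F2 (i+1,0) = enum L2 i" unfolding F2_def Fb_def using TD(6)[OF t2] enum_in[OF fin2] that c2 by simp
    ultimately show ?thesis by simp
  qed
  have LL: "L1 = L2"
  proof -
    have "L1 = enum L1 ` {..<n}" using enum_image[OF fin1] c1 by simp
    also have "\<dots> = enum L2 ` {..<n}" using ee by (intro image_cong) auto
    also have "\<dots> = L2" using enum_image[OF fin2] c2 by simp
    finally show ?thesis .
  qed
  have ff: "f1 = f2"
  proof (rule PiE_ext[OF TD(4)[OF t1]])
    show "f2 \<in> L1 \<times> {..<d} \<rightarrow>\<^sub>E {..<p}" using TD(4)[OF t2] LL by simp
    fix x assume "x \<in> L1 \<times> {..<d}"
    then obtain l j where x: "x = (l,j)" "l \<in> L1" "j < d" by auto
    have il: "idx L1 l < n" using idx_lt_card[OF fin1 x(2)] c1 by simp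
    have el: "enum L1 (idx L1 l) = l" using enum_idx[OF fin1 x(2)] .
    have "(idx L1 l + 1, j) \<in> CR_I n d" using il x by simp
    then have "F1 (idx L1 l + 1, j) = F2 (idx L1 l + 1, j)" by (rule FF)
    then show "f1 x = f2 x" unfolding F1_def F2_def Fb_def using x el LL by simp
  qed
  have YY: "Y1 = Y2"
  proof (rule PiE_ext[OF TD(3)[OF t1]])
    show "Y2 \<in> L1 \<rightarrow>\<^sub>E {..<k}" using TD(3)[OF t2] LL by simp
    fix l assume l: "l \<in> L1"
    have il: "idx L1 l < n" using idx_lt_card[OF fin1 l] c1 by simp
    have el: "enum L1 (idx L1 l) = l" using enum_idx[OF fin1 l] .
    have "(\<lambda>i\<in>{1..n}. Y1 (enum L1 (i-1))) (idx L1 l + 1) = (\<lambda>i\<in>{1..n}. Y2 (enum L2 (i-1))) (idx L1 l + 1)"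
      using Yeq by simp
    then show "Y1 l = Y2 l" using il el LL by simp
  qed
  show ?thesis using LL YY ff by simp
qed


lemma CRD:
  assumes "is_CR n d k Y R"
  shows "Y \<in> {1..n} \<rightarrow>\<^sub>E {..<k}" "R \<subseteq> CR_I n d \<times> CR_I n d" "refl_on (CR_I n d) R" "trans R"
    "total_on (CR_I n d) R"
    "\<And>i i'. d \<ge> 1 \<Longrightarrow> 1 \<le> i \<Longrightarrow> i < i' \<Longrightarrow> i' \<le> n \<Longrightarrow> CR_lt R (i, 0) (i', 0)"
    "\<And>i i'. d = 0 \<Longrightarrow> 1 \<le> i \<Longrightarrow> i < i' \<Longrightarrow> i' \<le> n \<Longrightarrow> Y i < Y i'"
    "\<And>i i' j. (i, j) \<in> CR_I n d \<Longrightarrow> (i', j) \<in> CR_I n d \<Longrightarrow> CR_eq R (i, j) (i', j) \<Longrightarrow> Y i = Y i'"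
    "\<And>i j j'. (i, j) \<in> CR_I n d \<Longrightarrow> (i, j') \<in> CR_I n d \<Longrightarrow> j > j' \<Longrightarrow> CR_lt R (i, j) (i, j')"
    "\<And>i j i' j'. (i, j) \<in> CR_I n d \<Longrightarrow> (i', j') \<in> CR_I n d \<Longrightarrow> CR_eq R (i, j) (i', j') \<Longrightarrow> j = j'"
    "\<And>i i' j. j > 0 \<Longrightarrow> (i, j) \<in> CR_I n d \<Longrightarrow> (i', j) \<in> CR_I n d \<Longrightarrow> \<not> CR_eq R (i, j) (i', j)
        \<Longrightarrow> \<not> CR_eq R (i, j - 1) (i', j - 1)"
  using assms unfolding is_CR_def by (elim conjE; blast)+

lemma relF_cong: "(\<And>x. x \<in> I \<Longrightarrow> F x = G x) \<Longrightarrow> relF F I = relF G I"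
  unfolding relF_def by auto

lemma beta_surj:
  assumes d: "d \<ge> 1" and c: "(Y,R) \<in> CRset p n d k"
  shows "\<exists>t \<in> T n d k {..<p}. beta n d t = (Y,R)"
proof -
  have cr: "is_CR n d k Y R" and sz: "CR_size n d R = p" using c unfolding CRset_def by auto
  define I where "I = CR_I n d"
  obtain F :: "nat \<times> nat \<Rightarrow> nat" where FI0: "F ` I = {..<card (F ` I)}"
    and FR: "\<And>x y. x \<in> I \<Longrightarrow> y \<in> I \<Longrightarrow> (x,y) \<in> R \<longleftrightarrow> F x \<le> F y"
    using rank_exists[of I R] CRD(2-5)[OF cr] unfolding I_def by auto
  have RF: "R = relF F I"
    using CRD(2)[OF cr] FR unfolding relF_def I_def by auto
  have FI: "F ` I = {..<p}"
    using sz FI0 unfolding CR_size_def RF I_def relF_quot by simp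
  define h where "h i = F (i+1, 0)" for i
  have hmono: "h i < h i'" if "i < i'" "i' < n" for i i'
  proof -
    have "CR_lt R (i+1, 0) (i'+1, 0)" using CRD(6)[OF cr d, of "i+1" "i'+1"] that by simp
    then show ?thesis unfolding RF relF_lt h_def by simp
  qed
  define L where "L = h ` {..<n}"
  have finL: "finite L" unfolding L_def by simp
  have cL: "card L = n" unfolding L_def using card_mono_image[of n h] hmono by blast
  have idxh: "idx L (h i) = i" if "i < n" for i
    using idx_of_mono[of n h L i] hmono that L_def by blast
  have enumh: "enum L i = h i" if "i < n" for i
    using enum_unique[of n h L i] hmono that L_def by blast
  have Lh: "idx L l < n \<and> h (idx L l) = l" if "l \<in> L" for l
    using that idxh unfolding L_def by auto
  define Y' where "Y' = restrict (\<lambda>l. Y (idx L l + 1)) L"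
  define f' where "f' = restrict (\<lambda>(l,j). F (idx L l + 1, j)) (L \<times> {..<d})"
  have f'v: "f' (l,j) = F (idx L l + 1, j)" if "l \<in> L" "j < d" for l j
    unfolding f'_def using that by simp
  have inI: "(idx L l + 1, j) \<in> I" if "l \<in> L" "j < d" for l j
    unfolding I_def using Lh[OF that(1)] that by simp
  have Ybd: "Y i < k" if "1 \<le> i" "i \<le> n" for i using CRD(1)[OF cr] that by auto
  have t: "(L,Y',f') \<in> T n d k {..<p}"
    unfolding Tmem
  proof (intro conjI ballI allI impI)
    show "L \<subseteq> {..<p}"
    proof
      fix l assume "l \<in> L"
      then obtain i where "i < n" "l = h i" unfolding L_def by auto
      then have "(i+1,0) \<in> I" using d unfolding I_def by simp
      then show "l \<in> {..<p}" using FI \<open>l = h i\<close> unfolding h_def by blast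
    qed
    show "card L = n" by (rule cL)
    have "Y (idx L l + 1) < k" if "l \<in> L" for l using Ybd Lh[OF that] by simp
    then show "Y' \<in> L \<rightarrow>\<^sub>E {..<k}" unfolding Y'_def by (auto simp: PiE_iff)
    show "f' \<in> L \<times> {..<d} \<rightarrow>\<^sub>E {..<p}"
      unfolding f'_def using inI FI by (auto simp: PiE_iff)
    show "f' ` (L \<times> {..<d}) = {..<p}"
    proof
      show "f' ` (L \<times> {..<d}) \<subseteq> {..<p}" using f'v inI FI by auto
      show "{..<p} \<subseteq> f' ` (L \<times> {..<d})"
      proof
        fix v assume "v \<in> {..<p}"
        then have "v \<in> F ` I" using FI by simp
        then obtain x where "x \<in> I" "v = F x" by blast
        then obtain i j where ij: "(i,j) \<in> I" "v = F (i,j)" by (cases x) auto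
        then have i: "1 \<le> i" "i \<le> n" "j < d" unfolding I_def by auto
        have hl: "h (i-1) \<in> L" using i unfolding L_def by auto
        have "f' (h (i-1), j) = F (i,j)" using f'v[OF hl i(3)] idxh[of "i-1"] i by simp
        then show "v \<in> f' ` (L \<times> {..<d})" using hl i ij by force
      qed
    qed
  next
    fix l assume l: "l \<in> L"
    show "f' (l,0) = l" using f'v[OF l] d Lh[OF l] unfolding h_def by simp
  next
    fix l l' j assume l: "l \<in> L" and l': "l' \<in> L"
    {
      assume j: "j < d" "f' (l,j) = f' (l',j)"
      then have "CR_eq R (idx L l + 1, j) (idx L l' + 1, j)"
        unfolding RF relF_eq using f'v l l' inI by simp
      then have "Y (idx L l + 1) = Y (idx L l' + 1)"
        using CRD(8)[OF cr] inI[OF l j(1)] inI[OF l' j(1)] unfolding I_def by blast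
      then show "Y' l = Y' l'" unfolding Y'_def using l l' by simp
    }
    {
      fix j' assume j: "j < d" "j' < d" "f' (l,j) = f' (l',j')"
      then have "CR_eq R (idx L l + 1, j) (idx L l' + 1, j')"
        unfolding RF relF_eq using f'v l l' inI by simp
      then show "j = j'"
        using CRD(10)[OF cr] inI[OF l j(1)] inI[OF l' j(2)] unfolding I_def by blast
    }
    {
      assume j: "0 < j \<and> j < d \<and> f' (l, j - 1) = f' (l', j - 1)"
      then have jd: "j - 1 < d" by (elim conjE) arith
      have "CR_eq R (idx L l + 1, j-1) (idx L l' + 1, j-1)"
        unfolding RF relF_eq using f'v[OF l jd] f'v[OF l' jd] inI[OF l jd] inI[OF l' jd] j by simp
      then have "CR_eq R (idx L l + 1, j) (idx L l' + 1, j)"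
        using CRD(11)[OF cr] inI[OF l] inI[OF l'] j unfolding I_def by blast
      then show "f' (l,j) = f' (l',j)"
        unfolding RF relF_eq using f'v l l' j by simp
    }
  next
    fix l j j' assume l: "l \<in> L" and j: "j' < j \<and> j < d"
    then have jj: "j' < j" "j < d" "j' < d" by auto
    have "CR_lt R (idx L l + 1, j) (idx L l + 1, j')"
      using CRD(9)[OF cr inI[OF l jj(2), unfolded I_def] inI[OF l jj(3), unfolded I_def] jj(1)] .
    then show "f' (l,j) < f' (l,j')"
      unfolding RF relF_lt using f'v l jj by simp
  qed
  have b: "beta n d (L,Y',f') = (Y,R)"
  proof -
    have "(\<lambda>i\<in>{1..n}. Y' (enum L (i-1))) = Y"
    proof (rule PiE_ext[OF _ CRD(1)[OF cr]])
      show "(\<lambda>i\<in>{1..n}. Y' (enum L (i-1))) \<in> {1..n} \<rightarrow>\<^sub>E {..<k}"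
        using Ybd enumh Lh idxh unfolding Y'_def L_def by (auto simp: PiE_iff)
      fix i assume i: "i \<in> {1..n}"
      then have "enum L (i-1) = h (i-1)" "h (i-1) \<in> L" "idx L (h (i-1)) = i - 1"
        using enumh idxh unfolding L_def by auto
      then show "(\<lambda>i\<in>{1..n}. Y' (enum L (i-1))) i = Y i" using i unfolding Y'_def by simp
    qed
    moreover have "relF (Fb L f') (CR_I n d) = R"
    proof -
      have "relF (Fb L f') I = relF F I"
      proof (rule relF_cong)
        fix x assume x: "x \<in> I"
        then obtain i j where ij: "x = (i,j)" "1 \<le> i" "i \<le> n" "j < d" unfolding I_def by (cases x) auto
        then have "enum L (i-1) = h (i-1)" "h (i-1) \<in> L" "idx L (h (i-1)) = i - 1"
          using enumh idxh unfolding L_def by auto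
        then show "Fb L f' x = F x" unfolding Fb_def using ij f'v by simp
      qed
      then show ?thesis using RF I_def by simp
    qed
    ultimately show ?thesis unfolding beta_def by simp
  qed
  show ?thesis using t b by blast
qed

lemma finite_T: "finite Rk \<Longrightarrow> finite (T n d k Rk)"
proof -
  assume fin: "finite Rk"
  have "T n d k Rk \<subseteq> (SIGMA L:Pow Rk. (L \<rightarrow>\<^sub>E {..<k}) \<times> (L \<times> {..<d} \<rightarrow>\<^sub>E Rk))"
    unfolding T_def by auto
  moreover have "finite (SIGMA L:Pow Rk. (L \<rightarrow>\<^sub>E {..<k}) \<times> (L \<times> {..<d} \<rightarrow>\<^sub>E Rk))"
    using fin by (intro finite_SigmaI finite_cartesian_product finite_PiE) (auto dest: finite_subset)
  ultimately show ?thesis by (rule finite_subset)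
qed

lemma P_T:
  assumes d: "d \<ge> 1"
  shows "P p n d k = card (T n d k {..<p})"
proof -
  have "bij_betw (beta n d) (T n d k {..<p}) (CRset p n d k)"
  proof (rule bij_betw_imageI)
    show "inj_on (beta n d) (T n d k {..<p})"
      by (rule inj_onI) (use beta_inj[OF d] in fastforce)
    show "beta n d ` T n d k {..<p} = CRset p n d k"
    proof
      show "beta n d ` T n d k {..<p} \<subseteq> CRset p n d k" using beta_into[OF d] by auto
      show "CRset p n d k \<subseteq> beta n d ` T n d k {..<p}"
      proof
        fix x assume "x \<in> CRset p n d k"
        then obtain Y R where "x = (Y,R)" "(Y,R) \<in> CRset p n d k" by (cases x) auto
        then show "x \<in> beta n d ` T n d k {..<p}" using beta_surj[OF d] by force
      qed
    qed
  qed
  then show ?thesis unfolding P_CRset by (simp add: bij_betw_same_card)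
qed


definition M :: "(nat \<Rightarrow> nat) \<Rightarrow> (nat \<Rightarrow> nat) \<Rightarrow> nat \<Rightarrow> nat set \<times> (nat \<Rightarrow> nat) \<times> (nat \<times> nat \<Rightarrow> nat)
   \<Rightarrow> nat set \<times> (nat \<Rightarrow> nat) \<times> (nat \<times> nat \<Rightarrow> nat)" where
  "M \<phi> \<psi> d t = (case t of (L,Y,f) \<Rightarrow> (\<phi> ` L, restrict (\<lambda>l. Y (\<psi> l)) (\<phi> ` L),
      restrict (\<lambda>(l,j). \<phi> (f (\<psi> l, j))) (\<phi> ` L \<times> {..<d})))"

lemma M_into:
  assumes mono: "\<And>x y. x \<in> Rk \<Longrightarrow> y \<in> Rk \<Longrightarrow> x < y \<Longrightarrow> \<phi> x < \<phi> y"
    and inv: "\<And>x. x \<in> Rk \<Longrightarrow> \<psi> (\<phi> x) = x"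
    and d: "d \<ge> 1"
    and t: "(L,Y,f) \<in> T n d k Rk"
  shows "M \<phi> \<psi> d (L,Y,f) \<in> T n d k (\<phi> ` Rk)"
proof -
  have inj: "inj_on \<phi> Rk"
  proof (rule inj_onI)
    fix x y assume "x \<in> Rk" "y \<in> Rk" "\<phi> x = \<phi> y"
    then have "\<psi> (\<phi> x) = \<psi> (\<phi> y)" by simp
    then show "x = y" using inv[OF \<open>x \<in> Rk\<close>] inv[OF \<open>y \<in> Rk\<close>] by (rule box_equals)
  qed
  have eqv: "\<phi> x = \<phi> y \<longleftrightarrow> x = y" if "x \<in> Rk" "y \<in> Rk" for x y using inj that by (auto dest: inj_onD)
  have lt: "\<phi> x < \<phi> y \<longleftrightarrow> x < y" if "x \<in> Rk" "y \<in> Rk" for x y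
    using mono[OF that] mono[OF that(2,1)] that by (cases x y rule: linorder_cases) auto
  have LR: "L \<subseteq> Rk" using TD(1)[OF t] .
  have fR: "f (l,j) \<in> Rk" if "l \<in> L" "j < d" for l j using TD(4)[OF t] that by auto
  have inL: "\<psi> (\<phi> l) = l" if "l \<in> L" for l using inv LR that by auto
  define L' where "L' = \<phi> ` L"
  define Y' where "Y' = restrict (\<lambda>l. Y (\<psi> l)) L'"
  define f' where "f' = restrict (\<lambda>(l,j). \<phi> (f (\<psi> l, j))) (L' \<times> {..<d})"
  have Mv: "M \<phi> \<psi> d (L,Y,f) = (L',Y',f')" unfolding M_def L'_def Y'_def f'_def by simp
  have f'v: "f' (\<phi> l, j) = \<phi> (f (l,j))" if "l \<in> L" "j < d" for l j
  proof -
    have "(\<phi> l, j) \<in> L' \<times> {..<d}" unfolding L'_def using that by simp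
    then show ?thesis unfolding f'_def using inL[OF that(1)] by simp
  qed
  have Y'v: "Y' (\<phi> l) = Y l" if "l \<in> L" for l
  proof -
    have "\<phi> l \<in> L'" unfolding L'_def using that by simp
    then show ?thesis unfolding Y'_def using inL[OF that] by simp
  qed
  note C2 = TD(7)[OF t] and C3 = TD(8)[OF t] and C4 = TD(9)[OF t] and C5 = TD(10)[OF t]
  have "(L',Y',f') \<in> T n d k (\<phi> ` Rk)"
    unfolding Tmem
  proof (intro conjI ballI allI impI)
    show "L' \<subseteq> \<phi> ` Rk" unfolding L'_def using LR by auto
    show "card L' = n" unfolding L'_def using TD(2)[OF t] card_image[OF inj_on_subset[OF inj LR]] by simp
    show "Y' \<in> L' \<rightarrow>\<^sub>E {..<k}"
    proof -
      have "Y (\<psi> l') < k" if "l' \<in> L'" for l'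
        using that TD(3)[OF t] inL unfolding L'_def by auto
      then show ?thesis unfolding Y'_def by (simp add: PiE_iff)
    qed
    show "f' \<in> L' \<times> {..<d} \<rightarrow>\<^sub>E \<phi> ` Rk"
    proof -
      have "\<phi> (f (\<psi> l', j)) \<in> \<phi> ` Rk" if "l' \<in> L'" "j < d" for l' j
        using that fR inL unfolding L'_def by auto
      then show ?thesis unfolding f'_def by (auto simp: PiE_iff)
    qed
    show "f' ` (L' \<times> {..<d}) = \<phi> ` Rk"
    proof -
      have "L' \<times> {..<d} = (\<lambda>(l,j). (\<phi> l, j)) ` (L \<times> {..<d})" unfolding L'_def by auto
      then have "f' ` (L' \<times> {..<d}) = (\<lambda>x. f' ((\<lambda>(l,j). (\<phi> l, j)) x)) ` (L \<times> {..<d})"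
        by (simp add: image_image)
      also have "\<dots> = (\<lambda>x. \<phi> (f x)) ` (L \<times> {..<d})"
        by (rule image_cong) (auto simp: f'v)
      also have "\<dots> = \<phi> ` (f ` (L \<times> {..<d}))" by (simp add: image_image)
      also have "\<dots> = \<phi> ` Rk" using TD(5)[OF t] by simp
      finally show ?thesis .
    qed
  next
    fix l' assume "l' \<in> L'"
    then obtain l where l: "l \<in> L" "l' = \<phi> l" unfolding L'_def by auto
    show "f' (l',0) = l'" using l f'v[OF l(1)] d TD(6)[OF t] by simp
  next
    fix l1' l2' j assume "l1' \<in> L'" "l2' \<in> L'"
    then obtain l1 l2 where l: "l1 \<in> L" "l1' = \<phi> l1" "l2 \<in> L" "l2' = \<phi> l2" unfolding L'_def by auto
    {
      assume j: "j < d" "f' (l1',j) = f' (l2',j)"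
      then have "f (l1,j) = f (l2,j)" using f'v l eqv fR by simp
      then have "Y l1 = Y l2" using C2 l j by blast
      then show "Y' l1' = Y' l2'" using l Y'v by simp
    }
    {
      fix j' assume j: "j < d" "j' < d" "f' (l1',j) = f' (l2',j')"
      then have "f (l1,j) = f (l2,j')" using f'v l eqv fR by simp
      then show "j = j'" using C4 l j by blast
    }
    {
      assume j: "0 < j \<and> j < d \<and> f' (l1', j - 1) = f' (l2', j - 1)"
      then have jd: "j - 1 < d" "0 < j" "j < d" by (elim conjE; arith)+
      then have "f (l1,j-1) = f (l2,j-1)" using f'v l eqv fR j by simp
      then have "f (l1,j) = f (l2,j)" using C5 l jd by blast
      then show "f' (l1',j) = f' (l2',j)" using f'v l jd by simp
    }
  next
    fix l' j j' assume "l' \<in> L'" and j: "j' < j \<and> j < d"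
    then obtain l where l: "l \<in> L" "l' = \<phi> l" unfolding L'_def by auto
    have jj: "j' < j" "j < d" "j' < d" using j by auto
    have "f (l,j) < f (l,j')" using C3 l jj by blast
    then show "f' (l',j) < f' (l',j')" using f'v l jj lt fR by simp
  qed
  then show ?thesis using Mv by simp
qed

lemma M_roundtrip:
  assumes inv: "\<And>x. x \<in> Rk \<Longrightarrow> \<psi> (\<phi> x) = x"
    and t: "(L,Y,f) \<in> T n d k Rk"
  shows "M \<psi> \<phi> d (M \<phi> \<psi> d (L,Y,f)) = (L,Y,f)"
proof -
  have LR: "L \<subseteq> Rk" using TD(1)[OF t] .
  have fR: "f (l,j) \<in> Rk" if "l \<in> L" "j < d" for l j using TD(4)[OF t] that by auto
  have inL: "\<psi> (\<phi> l) = l" if "l \<in> L" for l using inv LR that by auto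
  have L: "\<psi> ` \<phi> ` L = L" using inL by (force simp: image_iff)
  have Y: "restrict (\<lambda>l. restrict (\<lambda>l. Y (\<psi> l)) (\<phi> ` L) (\<phi> l)) L = Y"
  proof (rule PiE_ext[OF _ TD(3)[OF t]])
    show "restrict (\<lambda>l. restrict (\<lambda>l. Y (\<psi> l)) (\<phi> ` L) (\<phi> l)) L \<in> L \<rightarrow>\<^sub>E {..<k}"
      using TD(3)[OF t] inL by (auto simp: PiE_iff)
    fix l assume "l \<in> L" then show "restrict (\<lambda>l. restrict (\<lambda>l. Y (\<psi> l)) (\<phi> ` L) (\<phi> l)) L l = Y l"
      using inL by simp
  qed
  have F: "restrict (\<lambda>(l,j). \<psi> (restrict (\<lambda>(l,j). \<phi> (f (\<psi> l, j))) (\<phi> ` L \<times> {..<d}) (\<phi> l, j))) (L \<times> {..<d}) = f"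
  proof (rule PiE_ext[OF _ TD(4)[OF t]])
    show "restrict (\<lambda>(l,j). \<psi> (restrict (\<lambda>(l,j). \<phi> (f (\<psi> l, j))) (\<phi> ` L \<times> {..<d}) (\<phi> l, j))) (L \<times> {..<d}) \<in> L \<times> {..<d} \<rightarrow>\<^sub>E Rk"
      using fR inL inv by (auto simp: PiE_iff)
    fix x assume "x \<in> L \<times> {..<d}"
    then show "restrict (\<lambda>(l,j). \<psi> (restrict (\<lambda>(l,j). \<phi> (f (\<psi> l, j))) (\<phi> ` L \<times> {..<d}) (\<phi> l, j))) (L \<times> {..<d}) x = f x"
      using fR inL inv by auto
  qed
  show ?thesis unfolding M_def using L Y F by simp
qed

lemma T_card_canon:
  assumes fin: "finite Rk" and d: "d \<ge> 1"
  shows "card (T n d k Rk) = card (T n d k {..<card Rk})"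
proof -
  have m1: "\<And>x y. x \<in> Rk \<Longrightarrow> y \<in> Rk \<Longrightarrow> x < y \<Longrightarrow> idx Rk x < idx Rk y" using idx_less[OF fin] by blast
  have i1: "\<And>x. x \<in> Rk \<Longrightarrow> enum Rk (idx Rk x) = x" using enum_idx[OF fin] by blast
  have m2: "\<And>x y. x \<in> {..<card Rk} \<Longrightarrow> y \<in> {..<card Rk} \<Longrightarrow> x < y \<Longrightarrow> enum Rk x < enum Rk y"
    using enum_less[OF fin] by auto
  have i2: "\<And>x. x \<in> {..<card Rk} \<Longrightarrow> idx Rk (enum Rk x) = x" using idx_enum[OF fin] by auto
  have im1: "idx Rk ` Rk = {..<card Rk}" using idx_image[OF fin] .
  have im2: "enum Rk ` {..<card Rk} = Rk" using enum_image[OF fin] .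
  have "bij_betw (M (idx Rk) (enum Rk) d) (T n d k Rk) (T n d k {..<card Rk})"
  proof (rule bij_betw_byWitness[where f' = "M (enum Rk) (idx Rk) d"])
    show "\<forall>a\<in>T n d k Rk. M (enum Rk) (idx Rk) d (M (idx Rk) (enum Rk) d a) = a"
      using M_roundtrip[of Rk "enum Rk" "idx Rk", OF i1] by force
    show "\<forall>a\<in>T n d k {..<card Rk}. M (idx Rk) (enum Rk) d (M (enum Rk) (idx Rk) d a) = a"
      using M_roundtrip[of "{..<card Rk}" "idx Rk" "enum Rk", OF i2] by force
    show "M (idx Rk) (enum Rk) d ` T n d k Rk \<subseteq> T n d k {..<card Rk}"
      using M_into[of Rk "idx Rk" "enum Rk", OF m1 i1 d] im1 by force
    show "M (enum Rk) (idx Rk) d ` T n d k {..<card Rk} \<subseteq> T n d k Rk"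
      using M_into[of "{..<card Rk}" "enum Rk" "idx Rk", OF m2 i2 d] im2 by force
  qed
  then show ?thesis by (rule bij_betw_same_card)
qed

lemma T_card_P: "finite Rk \<Longrightarrow> d \<ge> 1 \<Longrightarrow> card (T n d k Rk) = P (card Rk) n d k"
  using T_card_canon[of Rk d n k] P_T[of d "card Rk" n k] by (simp only:)


definition sel :: "nat \<Rightarrow> nat \<Rightarrow> nat set \<Rightarrow> (nat \<times> nat \<Rightarrow> nat) \<Rightarrow> nat set" where
  "sel m d L f = {l\<in>L. f (l, d-1) = m}"

definition dlt :: "nat \<Rightarrow> nat \<Rightarrow> nat set \<times> (nat \<Rightarrow> nat) \<times> (nat \<times> nat \<Rightarrow> nat) \<Rightarrow>
   nat \<times> nat set \<times> (nat set \<times> (nat \<Rightarrow> nat) \<times> (nat \<times> nat \<Rightarrow> nat)) \<times> (nat set \<times> (nat \<Rightarrow> nat) \<times> (nat \<times> nat \<Rightarrow> nat))" where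
  "dlt m d t = (case t of (L,Y,f) \<Rightarrow> (Y (Min (sel m d L f)), f ` (sel m d L f \<times> {..<d-1}),
     (sel m d L f, restrict (\<lambda>_. 0) (sel m d L f), restrict f (sel m d L f \<times> {..<d-1})),
     (L - sel m d L f, restrict Y (L - sel m d L f), restrict f ((L - sel m d L f) \<times> {..<d}))))"

definition gam :: "nat \<Rightarrow> nat \<Rightarrow> nat \<times> nat set \<times> (nat set \<times> (nat \<Rightarrow> nat) \<times> (nat \<times> nat \<Rightarrow> nat)) \<times> (nat set \<times> (nat \<Rightarrow> nat) \<times> (nat \<times> nat \<Rightarrow> nat))
   \<Rightarrow> nat set \<times> (nat \<Rightarrow> nat) \<times> (nat \<times> nat \<Rightarrow> nat)" where
  "gam m d u = (case u of (c, A, (S,Y1,g), (L2,Y2,h)) \<Rightarrow>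
     (S \<union> L2, restrict (\<lambda>l. if l \<in> S then c else Y2 l) (S \<union> L2),
      restrict (\<lambda>(l,j). if l \<in> S then (if j = d-1 then m else g (l,j)) else h (l,j)) ((S \<union> L2) \<times> {..<d})))"

definition U :: "nat \<Rightarrow> nat \<Rightarrow> nat \<Rightarrow> nat set \<Rightarrow> (nat \<times> nat set \<times> (nat set \<times> (nat \<Rightarrow> nat) \<times> (nat \<times> nat \<Rightarrow> nat)) \<times> (nat set \<times> (nat \<Rightarrow> nat) \<times> (nat \<times> nat \<Rightarrow> nat))) set" where
  "U n d k X = {..<k} \<times> (SIGMA A:Pow X. \<Union>j\<in>{1..n}. T j (d-1) 1 A \<times> T (n-j) d k (X - A))"

lemma up_eq:
  assumes t: "(L,Y,f) \<in> T n d k Rk" and l: "l \<in> L" "l' \<in> L"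
    and e: "f (l,j) = f (l',j)" and jj: "j \<le> j2" "j2 < d"
  shows "f (l,j2) = f (l',j2)"
  using jj
proof (induction j2 rule: dec_induct)
  case base show ?case by (rule e)
next
  case (step i)
  then have "f (l, Suc i - 1) = f (l', Suc i - 1)" by simp
  then show ?case using TD(10)[OF t l, of "Suc i"] step by simp
qed

context
  fixes d :: nat and Rk :: "nat set" and m :: nat
  assumes d2: "d \<ge> 2" and finR: "finite Rk" and neR: "Rk \<noteq> {}" and mdef: "m = Min Rk"
begin

lemma m_in: "m \<in> Rk" using Min_in[OF finR neR] mdef by simp
lemma m_le: "x \<in> Rk \<Longrightarrow> m \<le> x" using Min_le[OF finR] mdef by simp

lemma dlt_into:
  assumes t: "(L,Y,f) \<in> T n d k Rk"
  shows "dlt m d (L,Y,f) \<in> U n d k (Rk - {m})"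
proof -
  define S where "S = sel m d L f"
  define L2 where "L2 = L - S"
  define A where "A = f ` (S \<times> {..<d-1})"
  define B where "B = f ` (L2 \<times> {..<d})"
  have finL: "finite L" using TD(1)[OF t] finR finite_subset by blast
  have fR: "f (l,j) \<in> Rk" if "l \<in> L" "j < d" for l j using TD(4)[OF t] that by auto
  have SL: "S \<subseteq> L" unfolding S_def sel_def by auto
  have inS: "l \<in> S \<longleftrightarrow> l \<in> L \<and> f (l,d-1) = m" for l unfolding S_def sel_def by auto
  have bigger: "m < f (l,j)" if "l \<in> L" "j < d-1" for l j
  proof -
    have "f (l,d-1) < f (l,j)" by (rule TD(8)[OF t that(1)]) (use that d2 in auto)
    moreover have "m \<le> f (l,d-1)" using m_le fR that d2 by simp
    ultimately show ?thesis by simp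
  qed
  have Sne: "S \<noteq> {}"
  proof -
    have "m \<in> f ` (L \<times> {..<d})" using TD(5)[OF t] m_in by simp
    then obtain l j where lj: "l \<in> L" "j < d" "f (l,j) = m" by auto
    have "j = d-1"
    proof (rule ccontr)
      assume "j \<noteq> d-1" then have "j < d-1" using lj by simp
      then show False using bigger[OF lj(1)] lj(3) by auto
    qed
    then have "l \<in> S" using inS lj by simp
    then show ?thesis by auto
  qed
  have mA: "m \<notin> A" unfolding A_def using bigger SL by fastforce
  have mB: "m \<notin> B"
  proof
    assume "m \<in> B"
    then obtain l j where lj: "l \<in> L2" "j < d" "f (l,j) = m" unfolding B_def by auto
    show False
    proof (cases "j = d-1")
      case True then show False using lj inS unfolding L2_def by auto
    next
      case False then have "j < d-1" using lj by simp
      then show False using bigger[of l j] lj unfolding L2_def by auto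
    qed
  qed
  have AB: "A \<inter> B = {}"
  proof (rule ccontr)
    assume "A \<inter> B \<noteq> {}"
    then obtain l j l' j' where lj: "l \<in> S" "j < d-1" "l' \<in> L2" "j' < d" "f (l,j) = f (l',j')"
      unfolding A_def B_def by force
    have "j = j'" using TD(9)[OF t, of l l' j j'] lj SL unfolding L2_def by auto
    then have "f (l,d-1) = f (l',d-1)" using up_eq[OF t, of l l' j "d-1"] lj SL d2 unfolding L2_def by auto
    then have "l' \<in> S" using lj inS SL unfolding L2_def by auto
    then show False using lj unfolding L2_def by auto
  qed
  have Rdec: "Rk = insert m (A \<union> B)"
  proof
    show "insert m (A \<union> B) \<subseteq> Rk" using m_in fR SL unfolding A_def B_def L2_def by auto
    show "Rk \<subseteq> insert m (A \<union> B)"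
    proof
      fix x assume "x \<in> Rk"
      then obtain l j where lj: "l \<in> L" "j < d" "x = f (l,j)" using TD(5)[OF t] by force
      show "x \<in> insert m (A \<union> B)"
      proof (cases "l \<in> S")
        case True
        show ?thesis
        proof (cases "j = d-1")
          case True then show ?thesis using \<open>l \<in> S\<close> inS lj by simp
        next
          case False then have "j < d-1" using lj by simp
          then show ?thesis using \<open>l \<in> S\<close> lj unfolding A_def by auto
        qed
      next
        case False then have "l \<in> L2" using lj unfolding L2_def by simp
        then show ?thesis using lj unfolding B_def by auto
      qed
    qed
  qed
  have AX: "A \<subseteq> Rk - {m}" using Rdec mA by auto
  have BX: "B = (Rk - {m}) - A" using Rdec mA mB AB by auto
  have cS: "1 \<le> card S" "card S \<le> n" using Sne SL finL TD(2)[OF t] card_mono[OF finL SL]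
    by (auto simp: Suc_le_eq card_gt_0_iff intro: finite_subset)
  have cL2: "card L2 = n - card S" unfolding L2_def using card_Diff_subset[OF finite_subset[OF SL finL] SL] TD(2)[OF t] by simp
  have Yk: "Y (Min S) < k"
  proof -
    have "Min S \<in> S" using Sne finite_subset[OF SL finL] by simp
    then show ?thesis using TD(3)[OF t] SL by auto
  qed
  have t1: "(S, restrict (\<lambda>_. 0::nat) S, restrict f (S \<times> {..<d-1})) \<in> T (card S) (d-1) 1 A"
    unfolding Tmem
  proof (intro conjI ballI allI impI)
    show "S \<subseteq> A"
    proof
      fix l assume "l \<in> S"
      then have "f (l,0) = l" using TD(6)[OF t] SL by auto
      moreover have "(l,0) \<in> S \<times> {..<d-1}" using \<open>l \<in> S\<close> d2 by simp
      ultimately show "l \<in> A" unfolding A_def by (metis image_eqI)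
    qed
    show "card S = card S" ..
    show "restrict (\<lambda>_. 0::nat) S \<in> S \<rightarrow>\<^sub>E {..<1}" by (simp add: PiE_iff)
    show "restrict f (S \<times> {..<d-1}) \<in> S \<times> {..<d-1} \<rightarrow>\<^sub>E A" unfolding A_def by auto
    show "restrict f (S \<times> {..<d-1}) ` (S \<times> {..<d-1}) = A" unfolding A_def by simp
  next
    fix l assume "l \<in> S" then show "restrict f (S \<times> {..<d-1}) (l,0) = l" using TD(6)[OF t] SL d2 by auto
  next
    fix l l' j assume l: "l \<in> S" "l' \<in> S"
    have lL: "l \<in> L" "l' \<in> L" using l SL by auto
    show "j < d-1 \<Longrightarrow> restrict f (S \<times> {..<d-1}) (l,j) = restrict f (S \<times> {..<d-1}) (l',j) \<Longrightarrow>
        restrict (\<lambda>_. 0::nat) S l = restrict (\<lambda>_. 0::nat) S l'" using l by simp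
    {
      fix j' assume j: "j < d-1" "j' < d-1" "restrict f (S \<times> {..<d-1}) (l,j) = restrict f (S \<times> {..<d-1}) (l',j')"
      then have "f (l,j) = f (l',j')" using l by simp
      moreover have "j < d" "j' < d" using j by auto
      ultimately show "j = j'" using TD(9)[OF t lL] by blast
    }
    {
      assume j: "0 < j \<and> j < d-1 \<and> restrict f (S \<times> {..<d-1}) (l,j-1) = restrict f (S \<times> {..<d-1}) (l',j-1)"
      then have jj: "0 < j" "j < d-1" "j - 1 < d - 1" by (elim conjE; arith)+
      then have "f (l,j-1) = f (l',j-1)" using l j by simp
      moreover have "j < d" using jj by simp
      ultimately have "f (l,j) = f (l',j)" using TD(10)[OF t lL jj(1)] by blast
      then show "restrict f (S \<times> {..<d-1}) (l,j) = restrict f (S \<times> {..<d-1}) (l',j)" using l jj by simp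
    }
  next
    fix l j j' assume l: "l \<in> S" and j: "j' < j \<and> j < d-1"
    then have jj: "j' < j" "j < d-1" "j' < d-1" by auto
    have "l \<in> L" "j < d" using l SL jj by auto
    then have "f (l,j) < f (l,j')" using TD(8)[OF t] jj(1) by blast
    then show "restrict f (S \<times> {..<d-1}) (l,j) < restrict f (S \<times> {..<d-1}) (l,j')" using l jj by simp
  qed
  have t2: "(L2, restrict Y L2, restrict f (L2 \<times> {..<d})) \<in> T (n - card S) d k B"
    unfolding Tmem
  proof (intro conjI ballI allI impI)
    show "L2 \<subseteq> B"
    proof
      fix l assume "l \<in> L2"
      then have "f (l,0) = l" using TD(6)[OF t] unfolding L2_def by auto
      moreover have "(l,0) \<in> L2 \<times> {..<d}" using \<open>l \<in> L2\<close> d2 by simp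
      ultimately show "l \<in> B" unfolding B_def by (metis image_eqI)
    qed
    show "card L2 = n - card S" by (rule cL2)
    show "restrict Y L2 \<in> L2 \<rightarrow>\<^sub>E {..<k}" using TD(3)[OF t] unfolding L2_def by auto
    show "restrict f (L2 \<times> {..<d}) \<in> L2 \<times> {..<d} \<rightarrow>\<^sub>E B" unfolding B_def by auto
    show "restrict f (L2 \<times> {..<d}) ` (L2 \<times> {..<d}) = B" unfolding B_def by simp
  next
    fix l assume "l \<in> L2" then show "restrict f (L2 \<times> {..<d}) (l,0) = l" using TD(6)[OF t] d2 unfolding L2_def by auto
  next
    fix l l' j assume l: "l \<in> L2" "l' \<in> L2"
    then have lL: "l \<in> L" "l' \<in> L" unfolding L2_def by auto
    {
      assume j: "j < d" "restrict f (L2 \<times> {..<d}) (l,j) = restrict f (L2 \<times> {..<d}) (l',j)"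
      then have "f (l,j) = f (l',j)" using l by simp
      then have "Y l = Y l'" using TD(7)[OF t lL j(1)] by blast
      then show "restrict Y L2 l = restrict Y L2 l'" using l by simp
    }
    {
      fix j' assume j: "j < d" "j' < d" "restrict f (L2 \<times> {..<d}) (l,j) = restrict f (L2 \<times> {..<d}) (l',j')"
      then have "f (l,j) = f (l',j')" using l by simp
      then show "j = j'" using TD(9)[OF t lL j(1,2)] by blast
    }
    {
      assume j: "0 < j \<and> j < d \<and> restrict f (L2 \<times> {..<d}) (l,j-1) = restrict f (L2 \<times> {..<d}) (l',j-1)"
      then have jj: "0 < j" "j < d" "j - 1 < d" by (elim conjE; arith)+
      then have "f (l,j-1) = f (l',j-1)" using l j by simp
      then have "f (l,j) = f (l',j)" using TD(10)[OF t lL jj(1,2)] by blast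
      then show "restrict f (L2 \<times> {..<d}) (l,j) = restrict f (L2 \<times> {..<d}) (l',j)" using l jj by simp
    }
  next
    fix l j j' assume l: "l \<in> L2" and j: "j' < j \<and> j < d"
    then have jj: "j' < j" "j < d" "j' < d" by auto
    have lL: "l \<in> L" using l unfolding L2_def by auto
    have "f (l,j) < f (l,j')" using TD(8)[OF t lL jj(1,2)] .
    then show "restrict f (L2 \<times> {..<d}) (l,j) < restrict f (L2 \<times> {..<d}) (l,j')" using l jj by simp
  qed
  have dv: "dlt m d (L,Y,f) = (Y (Min S), A, (S, restrict (\<lambda>_. 0::nat) S, restrict f (S \<times> {..<d-1})),
      (L2, restrict Y L2, restrict f (L2 \<times> {..<d})))"
    unfolding dlt_def S_def A_def L2_def by simp
  show ?thesis unfolding dv U_def using Yk AX t1 t2 BX cS by auto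
qed

end


context
  fixes d :: nat and Rk :: "nat set" and m :: nat
  assumes d2: "d \<ge> 2" and finR: "finite Rk" and neR: "Rk \<noteq> {}" and mdef: "m = Min Rk"
begin

lemma m_in': "m \<in> Rk" using Min_in[OF finR neR] mdef by simp
lemma m_le': "x \<in> Rk \<Longrightarrow> m \<le> x" using Min_le[OF finR] mdef by simp

lemma gam_into:
  assumes u: "(c, A, (S,Y1,g), (L2,Y2,h)) \<in> U n d k (Rk - {m})"
  shows "gam m d (c, A, (S,Y1,g), (L2,Y2,h)) \<in> T n d k Rk"
proof -
  define B where "B = (Rk - {m}) - A"
  have ck: "c < k" and AX: "A \<subseteq> Rk - {m}" using u unfolding U_def by auto
  obtain j0 where j0: "j0 \<in> {1..n}" and t1: "(S,Y1,g) \<in> T j0 (d-1) 1 A"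
      and t2: "(L2,Y2,h) \<in> T (n-j0) d k B"
    using u unfolding U_def B_def by auto
  have BR: "B \<subseteq> Rk - {m}" unfolding B_def by auto
  have AB: "A \<inter> B = {}" unfolding B_def by auto
  have SA: "S \<subseteq> A" using TD(1)[OF t1] .
  have L2B: "L2 \<subseteq> B" using TD(1)[OF t2] .
  have "S \<subseteq> Rk" using SA AX by auto
  then have finS: "finite S" using finR by (rule finite_subset)
  have "L2 \<subseteq> Rk" using L2B BR by auto
  then have finL2: "finite L2" using finR by (rule finite_subset)
  have SL2: "S \<inter> L2 = {}" using SA L2B AB by auto
  have Sne: "S \<noteq> {}" using TD(2)[OF t1] j0 by auto
  have gA: "g (l,j) \<in> A" if "l \<in> S" "j < d-1" for l j using TD(4)[OF t1] that by auto
  have hB: "h (l,j) \<in> B" if "l \<in> L2" "j < d" for l j using TD(4)[OF t2] that by auto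
  have mlt: "m < a" if "a \<in> A \<union> B" for a using that AX BR m_le'[of a] by force
  define L where "L = S \<union> L2"
  define Y where "Y = restrict (\<lambda>l. if l \<in> S then c else Y2 l) L"
  define f where "f = restrict (\<lambda>(l,j). if l \<in> S then (if j = d-1 then m else g (l,j)) else h (l,j)) (L \<times> {..<d})"
  have gv: "gam m d (c, A, (S,Y1,g), (L2,Y2,h)) = (L,Y,f)" unfolding gam_def L_def Y_def f_def by simp
  have fS: "f (l,j) = (if j = d-1 then m else g (l,j))" if "l \<in> S" "j < d" for l j
    unfolding f_def L_def using that by simp
  have fL2: "f (l,j) = h (l,j)" if "l \<in> L2" "j < d" for l j
    unfolding f_def L_def using that SL2 by auto
  have YS: "Y l = c" if "l \<in> S" for l unfolding Y_def L_def using that by simp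
  have YL2: "Y l = Y2 l" if "l \<in> L2" for l unfolding Y_def L_def using that SL2 by auto
  have fSm: "f (l,d-1) = m" if "l \<in> S" for l using fS[OF that] d2 by simp
  have fSA: "f (l,j) \<in> A" if "l \<in> S" "j < d-1" for l j using fS[OF that(1)] gA[OF that] that by simp
  have fL2B: "f (l,j) \<in> B" if "l \<in> L2" "j < d" for l j using fL2[OF that] hB[OF that] by simp
  have mA: "m \<notin> A" and mB: "m \<notin> B" using AX BR by auto
  have fSv: "f (l,j) \<in> insert m A" if "l \<in> S" "j < d" for l j
  proof (cases "j = d-1")
    case True then show ?thesis using fSm[OF that(1)] by simp
  next
    case False then have "j < d-1" using that(2) by simp
    then show ?thesis using fSA[OF that(1)] by simp
  qed
  have "(L,Y,f) \<in> T n d k Rk"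
    unfolding Tmem
  proof (intro conjI ballI allI impI)
    show "L \<subseteq> Rk" unfolding L_def using SA L2B AX BR by auto
    show "card L = n" unfolding L_def using card_Un_disjoint[OF finS finL2 SL2] TD(2)[OF t1] TD(2)[OF t2] j0 by simp
    show "Y \<in> L \<rightarrow>\<^sub>E {..<k}" unfolding Y_def using ck TD(3)[OF t2] unfolding L_def by (auto simp: PiE_iff)
    have fRk: "f x \<in> Rk" if xm: "x \<in> L \<times> {..<d}" for x
    proof -
      obtain l j where x: "x = (l,j)" "l \<in> L" "j < d" using xm by (cases x) auto
      show ?thesis
      proof (cases "l \<in> S")
        case True
        show ?thesis
        proof (cases "j = d-1")
          case True then show ?thesis using x fSm \<open>l \<in> S\<close> m_in' by simp
        next
          case False then have "j < d-1" using x by simp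
          then show ?thesis using x fSA \<open>l \<in> S\<close> AX by auto
        qed
      next
        case False then have "l \<in> L2" using x unfolding L_def by auto
        then show ?thesis using x fL2B BR by auto
      qed
    qed
    show "f \<in> L \<times> {..<d} \<rightarrow>\<^sub>E Rk" unfolding PiE_iff using fRk unfolding f_def by auto
    show "f ` (L \<times> {..<d}) = Rk"
    proof
      show "f ` (L \<times> {..<d}) \<subseteq> Rk" using fRk by auto
      show "Rk \<subseteq> f ` (L \<times> {..<d})"
      proof
        fix x assume x: "x \<in> Rk"
        have Rdec: "Rk = insert m (A \<union> B)" using AX m_in' unfolding B_def by auto
        show "x \<in> f ` (L \<times> {..<d})"
        proof (cases "x = m")
          case True
          obtain l where "l \<in> S" using Sne by auto
          then have "f (l,d-1) = x" "(l,d-1) \<in> L \<times> {..<d}" using fSm True d2 unfolding L_def by auto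
          then show ?thesis by (metis image_eqI)
        next
          case False
          then have "x \<in> A \<or> x \<in> B" using x Rdec by auto
          then show ?thesis
          proof
            assume "x \<in> A"
            then obtain l j where lj: "l \<in> S" "j < d-1" "x = g (l,j)" using TD(5)[OF t1] by force
            then have "f (l,j) = x" "(l,j) \<in> L \<times> {..<d}" using fS[of l j] unfolding L_def by auto
            then show ?thesis by (metis image_eqI)
          next
            assume "x \<in> B"
            then obtain l j where lj: "l \<in> L2" "j < d" "x = h (l,j)" using TD(5)[OF t2] by force
            then have "f (l,j) = x" "(l,j) \<in> L \<times> {..<d}" using fL2[of l j] unfolding L_def by auto
            then show ?thesis by (metis image_eqI)
          qed
        qed
      qed
    qed
  next
    fix l assume "l \<in> L"
    then show "f (l,0) = l"
    proof (cases "l \<in> S")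
      case True then show ?thesis using fS[OF True, of 0] d2 TD(6)[OF t1] by simp
    next
      case False then have "l \<in> L2" using \<open>l \<in> L\<close> unfolding L_def by auto
      then show ?thesis using fL2[of l 0] d2 TD(6)[OF t2] by simp
    qed
  next
    fix l l' j assume l: "l \<in> L" "l' \<in> L"
    {
      assume j: "j < d" "f (l,j) = f (l',j)"
      show "Y l = Y l'"
      proof (cases "l \<in> S")
        case True note lS = True
        show ?thesis
        proof (cases "l' \<in> S")
          case True then show ?thesis using lS YS by simp
        next
          case False then have "l' \<in> L2" using l unfolding L_def by auto
          then have "f (l',j) \<in> B" using fL2B[OF _ j(1)] by simp
          moreover have "f (l,j) \<in> insert m A" by (rule fSv[OF lS j(1)])
          ultimately show ?thesis using j AB mB by auto
        qed
      next
        case False then have lL2: "l \<in> L2" using l unfolding L_def by auto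
        show ?thesis
        proof (cases "l' \<in> S")
          case True
          have "f (l',j) \<in> insert m A" by (rule fSv[OF True j(1)])
          moreover have "f (l,j) \<in> B" by (rule fL2B[OF lL2 j(1)])
          ultimately show ?thesis using j AB mB by auto
        next
          case False then have l'L2: "l' \<in> L2" using l unfolding L_def by auto
          have "h (l,j) = h (l',j)" using j fL2 lL2 l'L2 by simp
          then have "Y2 l = Y2 l'" using TD(7)[OF t2 lL2 l'L2 j(1)] by blast
          then show ?thesis using YL2 lL2 l'L2 by simp
        qed
      qed
    }
    {
      fix j' assume j: "j < d" "j' < d" "f (l,j) = f (l',j')"
      show "j = j'"
      proof (cases "l \<in> S")
        case True note lS = True
        show ?thesis
        proof (cases "l' \<in> S")
          case True note l'S = True
          show ?thesis
          proof (cases "j = d-1 \<or> j' = d-1")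
            case True
            then show ?thesis
            proof
              assume jd: "j = d-1"
              show ?thesis
              proof (rule ccontr)
                assume "j \<noteq> j'" then have "j' < d-1" using j jd by simp
                then have "f (l',j') \<in> A" by (rule fSA[OF l'S])
                moreover have "f (l,j) = m" using fSm[OF lS] jd by simp
                ultimately show False using j(3) mA by simp
              qed
            next
              assume jd: "j' = d-1"
              show ?thesis
              proof (rule ccontr)
                assume "j \<noteq> j'" then have "j < d-1" using j jd by simp
                then have "f (l,j) \<in> A" by (rule fSA[OF lS])
                moreover have "f (l',j') = m" using fSm[OF l'S] jd by simp
                ultimately show False using j(3) mA by simp
              qed
            qed
          next
            case False
            then have jj: "j < d-1" "j' < d-1" using j by auto
            then have "g (l,j) = g (l',j')" using fS lS l'S j by simp
            then show ?thesis using TD(9)[OF t1 lS l'S jj] by blast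
          qed
        next
          case False then have "l' \<in> L2" using l unfolding L_def by auto
          then have "f (l',j') \<in> B" using fL2B[OF _ j(2)] by simp
          moreover have "f (l,j) \<in> insert m A" by (rule fSv[OF lS j(1)])
          ultimately show ?thesis using j AB mB by auto
        qed
      next
        case False then have lL2: "l \<in> L2" using l unfolding L_def by auto
        show ?thesis
        proof (cases "l' \<in> S")
          case True
          have "f (l',j') \<in> insert m A" by (rule fSv[OF True j(2)])
          moreover have "f (l,j) \<in> B" by (rule fL2B[OF lL2 j(1)])
          ultimately show ?thesis using j AB mB by auto
        next
          case False then have l'L2: "l' \<in> L2" using l unfolding L_def by auto
          have "h (l,j) = h (l',j')" using j fL2 lL2 l'L2 by simp
          then show ?thesis using TD(9)[OF t2 lL2 l'L2 j(1,2)] by blast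
        qed
      qed
    }
    {
      assume j: "0 < j \<and> j < d \<and> f (l, j - 1) = f (l', j - 1)"
      then have jj: "0 < j" "j < d" "j - 1 < d" and e: "f (l, j - 1) = f (l', j - 1)" by (elim conjE; arith)+
      show "f (l,j) = f (l',j)"
      proof (cases "l \<in> S")
        case True note lS = True
        show ?thesis
        proof (cases "l' \<in> S")
          case True note l'S = True
          show ?thesis
          proof (cases "j = d-1")
            case True then show ?thesis using fSm lS l'S by simp
          next
            case False
            then have j1: "j < d-1" "j - 1 < d-1" using jj by auto
            then have "g (l,j-1) = g (l',j-1)" using fS lS l'S e jj by simp
            then have "g (l,j) = g (l',j)" using TD(10)[OF t1 lS l'S jj(1) j1(1)] by blast
            then show ?thesis using fS lS l'S j1 jj by simp
          qed
        next
          case False then have "l' \<in> L2" using l unfolding L_def by auto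
          then have "f (l',j-1) \<in> B" using fL2B[OF _ jj(3)] by simp
          moreover have "f (l,j-1) \<in> A" using lS fSA jj d2 by simp
          ultimately show ?thesis using e AB by auto
        qed
      next
        case False then have lL2: "l \<in> L2" using l unfolding L_def by auto
        show ?thesis
        proof (cases "l' \<in> S")
          case True
          then have "f (l',j-1) \<in> A" using fSA jj d2 by simp
          moreover have "f (l,j-1) \<in> B" by (rule fL2B[OF lL2 jj(3)])
          ultimately show ?thesis using e AB by auto
        next
          case False then have l'L2: "l' \<in> L2" using l unfolding L_def by auto
          have "h (l,j-1) = h (l',j-1)" using e jj fL2 lL2 l'L2 by simp
          then have "h (l,j) = h (l',j)" using TD(10)[OF t2 lL2 l'L2 jj(1,2)] by blast
          then show ?thesis using fL2 lL2 l'L2 jj by simp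
        qed
      qed
    }
  next
    fix l j j' assume l: "l \<in> L" and j: "j' < j \<and> j < d"
    then have jj: "j' < j" "j < d" "j' < d" by auto
    show "f (l,j) < f (l,j')"
    proof (cases "l \<in> S")
      case True note lS = True
      show ?thesis
      proof (cases "j = d-1")
        case True
        then have "j' < d-1" using jj by simp
        then have "f (l,j') \<in> A" using fSA lS by simp
        then show ?thesis using mlt fSm lS True by auto
      next
        case False
        then have j1: "j < d-1" "j' < d-1" using jj by auto
        have "g (l,j) < g (l,j')" using TD(8)[OF t1 lS jj(1) j1(1)] .
        then show ?thesis using fS lS j1 jj by simp
      qed
    next
      case False then have lL2: "l \<in> L2" using l unfolding L_def by auto
      have "h (l,j) < h (l,j')" using TD(8)[OF t2 lL2 jj(1,2)] .
      then show ?thesis using fL2 lL2 jj by simp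
    qed
  qed
  then show ?thesis using gv by simp
qed

end


context
  fixes d :: nat and Rk :: "nat set" and m :: nat
  assumes d2: "d \<ge> 2" and finR: "finite Rk" and neR: "Rk \<noteq> {}" and mdef: "m = Min Rk"
begin

lemma dlt_gam:
  assumes u: "(c, A, (S,Y1,g), (L2,Y2,h)) \<in> U n d k (Rk - {m})"
  shows "dlt m d (gam m d (c, A, (S,Y1,g), (L2,Y2,h))) = (c, A, (S,Y1,g), (L2,Y2,h))"
proof -
  define B where "B = (Rk - {m}) - A"
  have AX: "A \<subseteq> Rk - {m}" using u unfolding U_def by auto
  obtain j0 where j0: "j0 \<in> {1..n}" and t1: "(S,Y1,g) \<in> T j0 (d-1) 1 A"
      and t2: "(L2,Y2,h) \<in> T (n-j0) d k B"
    using u unfolding U_def B_def by auto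
  have AB: "A \<inter> B = {}" unfolding B_def by auto
  have SA: "S \<subseteq> A" using TD(1)[OF t1] .
  have L2B: "L2 \<subseteq> B" using TD(1)[OF t2] .
  have SL2: "S \<inter> L2 = {}" using SA L2B AB by auto
  have "S \<subseteq> Rk" using SA AX by auto
  then have finS: "finite S" using finR by (rule finite_subset)
  have Sne: "S \<noteq> {}" using TD(2)[OF t1] j0 by auto
  have hB: "h (l,j) \<in> B" if "l \<in> L2" "j < d" for l j using TD(4)[OF t2] that by auto
  have mB: "m \<notin> B" unfolding B_def by auto
  define L where "L = S \<union> L2"
  define Y where "Y = restrict (\<lambda>l. if l \<in> S then c else Y2 l) L"
  define f where "f = restrict (\<lambda>(l,j). if l \<in> S then (if j = d-1 then m else g (l,j)) else h (l,j)) (L \<times> {..<d})"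
  have gv: "gam m d (c, A, (S,Y1,g), (L2,Y2,h)) = (L,Y,f)" unfolding gam_def L_def Y_def f_def by simp
  have fS: "f (l,j) = (if j = d-1 then m else g (l,j))" if "l \<in> S" "j < d" for l j
    unfolding f_def L_def using that by simp
  have fL2: "f (l,j) = h (l,j)" if "l \<in> L2" "j < d" for l j
    unfolding f_def L_def using that SL2 by auto
  have YS: "Y l = c" if "l \<in> S" for l unfolding Y_def L_def using that by simp
  have YL2: "Y l = Y2 l" if "l \<in> L2" for l unfolding Y_def L_def using that SL2 by auto
  have selS: "sel m d L f = S"
  proof
    show "S \<subseteq> sel m d L f" unfolding sel_def L_def using fS d2 by auto
    show "sel m d L f \<subseteq> S"
    proof
      fix l assume l: "l \<in> sel m d L f"
      show "l \<in> S"
      proof (rule ccontr)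
        assume "l \<notin> S"
        then have "l \<in> L2" "f (l,d-1) = m" using l unfolding sel_def L_def by auto
        then show False using fL2[of l "d-1"] hB[of l "d-1"] d2 mB by simp
      qed
    qed
  qed
  have LS: "L - S = L2" unfolding L_def using SL2 by auto
  have c: "Y (Min S) = c" using YS Min_in[OF finS Sne] by simp
  have A: "f ` (S \<times> {..<d-1}) = A"
  proof -
    have "f ` (S \<times> {..<d-1}) = g ` (S \<times> {..<d-1})"
      by (rule image_cong) (auto simp: fS)
    then show ?thesis using TD(5)[OF t1] by simp
  qed
  have Y1: "restrict (\<lambda>_. 0::nat) S = Y1"
  proof (rule extensionalityI)
    show "Y1 \<in> extensional S" using TD(3)[OF t1] by (simp add: PiE_iff)
    fix l assume "l \<in> S" then show "restrict (\<lambda>_. 0::nat) S l = Y1 l" using TD(3)[OF t1] by (auto simp: PiE_iff)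
  qed simp
  have g: "restrict f (S \<times> {..<d-1}) = g"
  proof (rule extensionalityI)
    show "g \<in> extensional (S \<times> {..<d-1})" using TD(4)[OF t1] by (simp add: PiE_iff)
    fix x assume "x \<in> S \<times> {..<d-1}" then show "restrict f (S \<times> {..<d-1}) x = g x" using fS by auto
  qed simp
  have Y2: "restrict Y L2 = Y2"
  proof (rule extensionalityI)
    show "Y2 \<in> extensional L2" using TD(3)[OF t2] by (simp add: PiE_iff)
    fix l assume "l \<in> L2" then show "restrict Y L2 l = Y2 l" using YL2 by simp
  qed simp
  have h: "restrict f (L2 \<times> {..<d}) = h"
  proof (rule extensionalityI)
    show "h \<in> extensional (L2 \<times> {..<d})" using TD(4)[OF t2] by (simp add: PiE_iff)
    fix x assume "x \<in> L2 \<times> {..<d}" then show "restrict f (L2 \<times> {..<d}) x = h x" using fL2 by auto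
  qed simp
  show ?thesis unfolding gv dlt_def using selS LS c A Y1 g Y2 h by simp
qed

lemma gam_dlt:
  assumes t: "(L,Y,f) \<in> T n d k Rk"
  shows "gam m d (dlt m d (L,Y,f)) = (L,Y,f)"
proof -
  define S where "S = sel m d L f"
  have SL: "S \<subseteq> L" unfolding S_def sel_def by auto
  have inS: "l \<in> S \<longleftrightarrow> l \<in> L \<and> f (l,d-1) = m" for l unfolding S_def sel_def by auto
  have du: "dlt m d (L,Y,f) \<in> U n d k (Rk - {m})" by (rule dlt_into[OF d2 finR neR mdef t])
  have dv: "dlt m d (L,Y,f) = (Y (Min S), f ` (S \<times> {..<d-1}), (S, restrict (\<lambda>_. 0::nat) S, restrict f (S \<times> {..<d-1})),
      (L - S, restrict Y (L - S), restrict f ((L - S) \<times> {..<d})))"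
    unfolding dlt_def S_def by simp
  obtain j0 where "j0 \<in> {1..n}" "(S, restrict (\<lambda>_. 0::nat) S, restrict f (S \<times> {..<d-1})) \<in> T j0 (d-1) 1 (f ` (S \<times> {..<d-1}))"
    using du unfolding dv U_def by auto
  then have Sne: "S \<noteq> {}" using TD(2) by fastforce
  have finL: "finite L" using TD(1)[OF t] finR by (rule finite_subset)
  have finS: "finite S" using SL finL by (rule finite_subset)
  have MS: "Min S \<in> S" using Min_in[OF finS Sne] .
  have LL: "S \<union> (L - S) = L" using SL by auto
  have YY: "restrict (\<lambda>l. if l \<in> S then Y (Min S) else restrict Y (L - S) l) (S \<union> (L - S)) = Y"
  proof (rule extensionalityI)
    show "Y \<in> extensional (S \<union> (L - S))" using TD(3)[OF t] LL by (simp add: PiE_iff)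
    fix l assume l: "l \<in> S \<union> (L - S)"
    then have l: "l \<in> L" using SL by blast
    show "restrict (\<lambda>l. if l \<in> S then Y (Min S) else restrict Y (L - S) l) (S \<union> (L - S)) l = Y l"
    proof (cases "l \<in> S")
      case True
      then have "f (l,d-1) = f (Min S, d-1)" "l \<in> L" "Min S \<in> L" using inS MS by auto
      then have "Y l = Y (Min S)" using TD(7)[OF t] d2 by (metis diff_less zero_less_one order_less_le_trans zero_less_numeral)
      then show ?thesis using True l by simp
    qed (use l LL in simp)
  qed simp
  have FF: "restrict (\<lambda>(l,j). if l \<in> S then (if j = d-1 then m else restrict f (S \<times> {..<d-1}) (l,j))
        else restrict f ((L - S) \<times> {..<d}) (l,j)) ((S \<union> (L - S)) \<times> {..<d}) = f"
  proof (rule extensionalityI)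
    show "f \<in> extensional ((S \<union> (L - S)) \<times> {..<d})" using TD(4)[OF t] LL by (simp add: PiE_iff)
    fix x assume x: "x \<in> (S \<union> (L - S)) \<times> {..<d}"
    then obtain l j where lj: "x = (l,j)" "l \<in> L" "j < d" using LL by auto
    show "restrict (\<lambda>(l,j). if l \<in> S then (if j = d-1 then m else restrict f (S \<times> {..<d-1}) (l,j))
        else restrict f ((L - S) \<times> {..<d}) (l,j)) ((S \<union> (L - S)) \<times> {..<d}) x = f x"
    proof (cases "l \<in> S")
      case True
      show ?thesis
      proof (cases "j = d-1")
        case True then show ?thesis using \<open>l \<in> S\<close> inS lj x by simp
      next
        case False then have "j < d-1" using lj by simp
        then show ?thesis using \<open>l \<in> S\<close> lj x by simp
      qed
    next
      case False then show ?thesis using lj x by simp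
    qed
  qed simp
  show ?thesis unfolding dv gam_def prod.case unfolding YY FF using LL by simp
qed

end


lemma T_rec:
  assumes d2: "d \<ge> 2" and finR: "finite Rk" and neR: "Rk \<noteq> {}" and mdef: "m = Min Rk"
  shows "card (T n d k Rk) = card (U n d k (Rk - {m}))"
proof -
  have "bij_betw (dlt m d) (T n d k Rk) (U n d k (Rk - {m}))"
  proof (rule bij_betw_byWitness[where f' = "gam m d"])
    show "\<forall>a\<in>T n d k Rk. gam m d (dlt m d a) = a"
      using gam_dlt[OF d2 finR neR mdef] by force
    show "\<forall>a'\<in>U n d k (Rk - {m}). dlt m d (gam m d a') = a'"
      using dlt_gam[OF d2 finR neR mdef] by force
    show "dlt m d ` T n d k Rk \<subseteq> U n d k (Rk - {m})"
      using dlt_into[OF d2 finR neR mdef] by force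
    show "gam m d ` U n d k (Rk - {m}) \<subseteq> T n d k Rk"
      using gam_into[OF d2 finR neR mdef] by force
  qed
  then show ?thesis by (rule bij_betw_same_card)
qed

lemma card_U:
  assumes finX: "finite X" and d2: "d \<ge> 2"
  shows "card (U n d k X) = k * (\<Sum>A\<in>Pow X. \<Sum>j\<in>{1..n}. card (T j (d-1) 1 A) * card (T (n-j) d k (X - A)))"
proof -
  have fT: "finite (T j (d-1) 1 A \<times> T (n-j) d k (X - A))" if "A \<in> Pow X" for A j
  proof -
    have "finite A" "finite (X - A)" using finX that by (auto intro: finite_subset)
    then show ?thesis using finite_T by (intro finite_cartesian_product) auto
  qed
  have inner: "card (\<Union>j\<in>{1..n}. T j (d-1) 1 A \<times> T (n-j) d k (X - A)) =
      (\<Sum>j\<in>{1..n}. card (T j (d-1) 1 A) * card (T (n-j) d k (X - A)))" if A: "A \<in> Pow X" for A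
  proof -
    have "card (\<Union>j\<in>{1..n}. T j (d-1) 1 A \<times> T (n-j) d k (X - A)) =
        (\<Sum>j\<in>{1..n}. card (T j (d-1) 1 A \<times> T (n-j) d k (X - A)))"
    proof (rule card_UN_disjoint)
      show "finite {1..n}" by simp
      show "\<forall>i::nat\<in>{1..n}. finite (T i (d-1) 1 A \<times> T (n-i) d k (X - A))" using fT[OF A] by blast
      show "\<forall>i\<in>{1..n}. \<forall>j\<in>{1..n}. i \<noteq> j \<longrightarrow>
          (T i (d-1) 1 A \<times> T (n-i) d k (X - A)) \<inter> (T j (d-1) 1 A \<times> T (n-j) d k (X - A)) = {}"
      proof (intro ballI impI)
        fix i j :: nat assume "i \<noteq> j"
        show "(T i (d-1) 1 A \<times> T (n-i) d k (X - A)) \<inter> (T j (d-1) 1 A \<times> T (n-j) d k (X - A)) = {}"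
        proof (rule ccontr)
          assume "\<not> ?thesis"
          then obtain L Y f z where "(L,Y,f) \<in> T i (d-1) 1 A" "(L,Y,f) \<in> T j (d-1) 1 A" by auto
          then have "card L = i" "card L = j" using TD(2) by blast+
          then show False using \<open>i \<noteq> j\<close> by simp
        qed
      qed
    qed
    then show ?thesis by (simp add: card_cartesian_product)
  qed
  have "card (U n d k X) = k * card (SIGMA A:Pow X. \<Union>j\<in>{1..n}. T j (d-1) 1 A \<times> T (n-j) d k (X - A))"
    unfolding U_def by (simp add: card_cartesian_product)
  also have "card (SIGMA A:Pow X. \<Union>j\<in>{1..n}. T j (d-1) 1 A \<times> T (n-j) d k (X - A)) =
      (\<Sum>A\<in>Pow X. card (\<Union>j\<in>{1..n}. T j (d-1) 1 A \<times> T (n-j) d k (X - A)))"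
    by (rule card_SigmaI) (use finX fT in auto)
  also have "\<dots> = (\<Sum>A\<in>Pow X. \<Sum>j\<in>{1..n}. card (T j (d-1) 1 A) * card (T (n-j) d k (X - A)))"
    by (rule sum.cong) (use inner in auto)
  finally show ?thesis .
qed

lemma sum_Pow_card:
  assumes "finite X"
  shows "(\<Sum>A\<in>Pow X. G (card A)) = (\<Sum>i=0..card X. (card X choose i) * G i)"
proof -
  have "(\<Sum>A\<in>Pow X. G (card A)) = (\<Sum>i\<in>{0..card X}. \<Sum>A\<in>{A. A \<in> Pow X \<and> card A = i}. G (card A))"
    by (rule sum.group[symmetric]) (use assms in \<open>auto intro: card_mono\<close>)
  also have "\<dots> = (\<Sum>i\<in>{0..card X}. (card X choose i) * G i)"
  proof (rule sum.cong)
    fix i assume "i \<in> {0..card X}"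
    have "(\<Sum>A\<in>{A. A \<in> Pow X \<and> card A = i}. G (card A)) = (\<Sum>A\<in>{A. A \<in> Pow X \<and> card A = i}. G i)"
      by (rule sum.cong) auto
    also have "\<dots> = card {A. A \<subseteq> X \<and> card A = i} * G i" by simp
    also have "\<dots> = (card X choose i) * G i" using n_subsets[OF assms] by simp
    finally show "(\<Sum>A\<in>{A. A \<in> Pow X \<and> card A = i}. G (card A)) = (card X choose i) * G i" .
  qed simp
  finally show ?thesis .
qed

lemma P_rec:
  assumes d2: "d \<ge> 2" and p: "p \<ge> 1"
  shows "P p n d k = k * (\<Sum>j = 1..n. \<Sum>i = 0..p - 1.
               ((p - 1) choose i) * P i j (d - 1) 1 * P (p - 1 - i) (n - j) d k)"
proof -
  define X where "X = {..<p} - {0::nat}"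
  have finX: "finite X" unfolding X_def by simp
  have cX: "card X = p - 1" unfolding X_def using p by simp
  have m0: "Min {..<p} = (0::nat)" using p by (intro Min_eqI) auto
  have "P p n d k = card (T n d k {..<p})" using P_T[of d p n k] d2 by simp
  also have "\<dots> = card (U n d k X)"
  proof -
    have "(0::nat) \<in> {..<p}" using p by simp
    then have "{..<p} \<noteq> {}" by blast
    then show ?thesis using T_rec[OF d2, of "{..<p}" 0 n k] m0 unfolding X_def by auto
  qed
  also have "\<dots> = k * (\<Sum>A\<in>Pow X. \<Sum>j\<in>{1..n}. card (T j (d-1) 1 A) * card (T (n-j) d k (X - A)))"
    by (rule card_U[OF finX d2])
  also have "(\<Sum>A\<in>Pow X. \<Sum>j\<in>{1..n}. card (T j (d-1) 1 A) * card (T (n-j) d k (X - A)))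
      = (\<Sum>A\<in>Pow X. \<Sum>j\<in>{1..n}. P (card A) j (d-1) 1 * P (p - 1 - card A) (n-j) d k)"
  proof (rule sum.cong[OF refl], rule sum.cong[OF refl])
    fix A j assume A: "A \<in> Pow X"
    then have finA: "finite A" using finX by (auto intro: finite_subset)
    have "card (X - A) = p - 1 - card A" using A cX finA by (simp add: card_Diff_subset)
    moreover have "finite (X - A)" using finX by simp
    ultimately show "card (T j (d-1) 1 A) * card (T (n-j) d k (X - A)) = P (card A) j (d-1) 1 * P (p - 1 - card A) (n-j) d k"
      using T_card_P[OF finA, of "d-1" j 1] T_card_P[of "X - A" d "n-j" k] d2 by simp
  qed
  also have "\<dots> = (\<Sum>j\<in>{1..n}. \<Sum>A\<in>Pow X. P (card A) j (d-1) 1 * P (p - 1 - card A) (n-j) d k)"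
    by (rule sum.swap)
  also have "\<dots> = (\<Sum>j\<in>{1..n}. \<Sum>i=0..p-1. ((p - 1) choose i) * (P i j (d-1) 1 * P (p - 1 - i) (n-j) d k))"
    by (rule sum.cong[OF refl]) (use sum_Pow_card[OF finX, of "\<lambda>i. P i _ (d-1) 1 * P (p - 1 - i) (n - _) d k"] cX in simp)
  finally show ?thesis by (simp add: mult.assoc)
qed


definition Yinc :: "nat \<Rightarrow> nat \<Rightarrow> nat \<Rightarrow> (nat \<Rightarrow> nat) set" where
  "Yinc n d k = {Y \<in> {1..n} \<rightarrow>\<^sub>E {..<k}. d = 0 \<longrightarrow> (\<forall>i i'. 1 \<le> i \<and> i < i' \<and> i' \<le> n \<longrightarrow> Y i < Y i')}"

lemma CRset_empty:
  assumes nd: "n = 0 \<or> d = 0"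
  shows "CRset p n d k = (if p = 0 then (\<lambda>Y. (Y, {})) ` Yinc n d k else {})"
proof -
  have I: "CR_I n d = {}" using nd by (auto simp: CR_I_def)
  have q: "{} // r = {}" for r :: "(nat \<times> nat) rel" by (simp add: quotient_def)
  have iff: "is_CR n d k Y R \<longleftrightarrow> R = {} \<and> Y \<in> Yinc n d k" for Y R
  proof
    assume "is_CR n d k Y R"
    then show "R = {} \<and> Y \<in> Yinc n d k"
      using CRD(1,2,7)[of n d k Y R] I unfolding Yinc_def by auto
  next
    assume a: "R = {} \<and> Y \<in> Yinc n d k"
    show "is_CR n d k Y R"
      unfolding is_CR_def I using a nd unfolding Yinc_def
      by (auto simp: refl_on_def trans_def total_on_def CR_lt_def CR_eq_def)
  qed
  show ?thesis
    unfolding CRset_def CR_size_def I q using iff by auto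
qed

lemma card_Yinc0: "card (Yinc n 0 k) = k choose n"
proof -
  define Sub where "Sub = {S. S \<subseteq> {..<k} \<and> card S = n}"
  have gI: "Y ` {1..n} = (\<lambda>i. Y (i+1)) ` {..<n}" for Y :: "nat \<Rightarrow> nat"
    unfolding image_Suc_lessThan[symmetric] image_image by simp
  have monoY: "\<And>i j. i < j \<Longrightarrow> j < n \<Longrightarrow> Y (i+1) < Y (j+1)" if "Y \<in> Yinc n 0 k" for Y
    using that unfolding Yinc_def by auto
  have "bij_betw (\<lambda>Y. Y ` {1..n}) (Yinc n 0 k) Sub"
  proof (rule bij_betw_imageI)
    show "inj_on (\<lambda>Y. Y ` {1..n}) (Yinc n 0 k)"
    proof (rule inj_onI)
      fix Y1 Y2 assume Y1: "Y1 \<in> Yinc n 0 k" and Y2: "Y2 \<in> Yinc n 0 k" and e: "Y1 ` {1..n} = Y2 ` {1..n}"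
      show "Y1 = Y2"
      proof (rule PiE_ext)
        show "Y1 \<in> {1..n} \<rightarrow>\<^sub>E {..<k}" "Y2 \<in> {1..n} \<rightarrow>\<^sub>E {..<k}" using Y1 Y2 unfolding Yinc_def by auto
        fix i assume i: "i \<in> {1..n}"
        then have i1: "i - 1 < n" by auto
        have "enum (Y1 ` {1..n}) (i-1) = Y1 (i - 1 + 1)"
          by (rule enum_unique[of n "\<lambda>i. Y1 (i+1)" "Y1 ` {1..n}" "i-1", OF monoY[OF Y1] gI i1])
        moreover have "enum (Y2 ` {1..n}) (i-1) = Y2 (i - 1 + 1)"
          by (rule enum_unique[of n "\<lambda>i. Y2 (i+1)" "Y2 ` {1..n}" "i-1", OF monoY[OF Y2] gI i1])
        ultimately show "Y1 i = Y2 i" using e i by simp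
      qed
    qed
    show "(\<lambda>Y. Y ` {1..n}) ` Yinc n 0 k = Sub"
    proof
      show "(\<lambda>Y. Y ` {1..n}) ` Yinc n 0 k \<subseteq> Sub"
      proof
        fix V assume "V \<in> (\<lambda>Y. Y ` {1..n}) ` Yinc n 0 k"
        then obtain Y where Y: "Y \<in> Yinc n 0 k" "V = Y ` {1..n}" by auto
        have "card V = n" using Y(2) gI card_mono_image[OF monoY[OF Y(1)]] by simp
        moreover have "V \<subseteq> {..<k}" using Y unfolding Yinc_def by auto
        ultimately show "V \<in> Sub" unfolding Sub_def by simp
      qed
      show "Sub \<subseteq> (\<lambda>Y. Y ` {1..n}) ` Yinc n 0 k"
      proof
        fix S assume S: "S \<in> Sub"
        then have Sk: "S \<subseteq> {..<k}" and cS: "card S = n" unfolding Sub_def by auto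
        have finS: "finite S" using Sk by (rule finite_subset) simp
        define Y where "Y = (\<lambda>i\<in>{1..n}. enum S (i-1))"
        have "Y \<in> Yinc n 0 k"
          unfolding Yinc_def Y_def using enum_in[OF finS] Sk cS enum_less[OF finS]
          by (auto simp: PiE_iff subset_iff)
        moreover have "Y ` {1..n} = S"
        proof -
          have "Y ` {1..n} = (\<lambda>i. Y (i+1)) ` {..<n}" by (rule gI)
          also have "\<dots> = enum S ` {..<n}" unfolding Y_def by (rule image_cong) auto
          also have "\<dots> = S" using enum_image[OF finS] cS by simp
          finally show ?thesis .
        qed
        ultimately show "S \<in> (\<lambda>Y. Y ` {1..n}) ` Yinc n 0 k" by force
      qed
    qed
  qed
  then have "card (Yinc n 0 k) = card Sub" by (rule bij_betw_same_card)
  also have "\<dots> = k choose n" unfolding Sub_def using n_subsets[of "{..<k}" n] by simp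
  finally show ?thesis .
qed

lemma P_d0: "P p n 0 k = (if p = 0 then k choose n else 0)"
proof -
  have "P p n 0 k = card (CRset p n 0 k)" by (rule P_CRset)
  also have "\<dots> = (if p = 0 then card (Yinc n 0 k) else 0)"
    using CRset_empty[of n 0 p k] by (simp add: card_image inj_on_def)
  finally show ?thesis using card_Yinc0 by simp
qed

lemma P_n0: "P p 0 d k = (if p = 0 then 1 else 0)"
proof -
  have "P p 0 d k = card (CRset p 0 d k)" by (rule P_CRset)
  also have "\<dots> = (if p = 0 then card (Yinc 0 d k) else 0)"
    using CRset_empty[of 0 d p k] by (simp add: card_image inj_on_def)
  also have "Yinc 0 d k = {\<lambda>_. undefined}" unfolding Yinc_def by auto
  finally show ?thesis by simp
qed

lemma T_d1: "T n 1 k {..<p} = (if n = p then (\<lambda>Y. ({..<p}, Y, restrict (\<lambda>(l,j). l) ({..<p} \<times> {..<1::nat}))) ` ({..<p} \<rightarrow>\<^sub>E {..<k}) else {})"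
proof -
  have fwd: "n = p \<and> L = {..<p} \<and> f = restrict (\<lambda>(l,j). l) ({..<p} \<times> {..<1::nat}) \<and> Y \<in> {..<p} \<rightarrow>\<^sub>E {..<k}"
    if t: "(L,Y,f) \<in> T n 1 k {..<p}" for L Y f
  proof -
    have dom: "L \<times> {..<1::nat} = (\<lambda>l. (l,0)) ` L" by auto
    have "f ` (L \<times> {..<1}) = L" unfolding dom image_image using TD(6)[OF t] by simp
    then have L: "L = {..<p}" using TD(5)[OF t] by simp
    have n: "n = p" using TD(2)[OF t] L by simp
    have f: "f = restrict (\<lambda>(l,j). l) ({..<p} \<times> {..<1::nat})"
    proof (rule extensionalityI)
      show "f \<in> extensional ({..<p} \<times> {..<1::nat})" using TD(4)[OF t] L by (simp add: PiE_iff)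
      fix x assume "x \<in> {..<p} \<times> {..<1::nat}"
      then obtain l where "x = (l,0)" "l \<in> L" using L by auto
      then show "f x = restrict (\<lambda>(l,j). l) ({..<p} \<times> {..<1::nat}) x" using TD(6)[OF t] L by simp
    qed simp
    show ?thesis using n L f TD(3)[OF t] by simp
  qed
  have bwd: "({..<p}, Y, restrict (\<lambda>(l,j). l) ({..<p} \<times> {..<1::nat})) \<in> T p 1 k {..<p}"
    if Y: "Y \<in> {..<p} \<rightarrow>\<^sub>E {..<k}" for Y
  proof -
    have im: "restrict (\<lambda>(l,j). l) ({..<p} \<times> {..<1::nat}) ` ({..<p} \<times> {..<1::nat}) = {..<p}"
      by (force simp: image_iff)
    show ?thesis unfolding Tmem using Y im by (auto simp: PiE_iff)
  qed
  show ?thesis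
  proof (cases "n = p")
    case True
    have "T p 1 k {..<p} = (\<lambda>Y. ({..<p}, Y, restrict (\<lambda>(l,j). l) ({..<p} \<times> {..<1::nat}))) ` ({..<p} \<rightarrow>\<^sub>E {..<k})"
    proof (rule set_eqI, rule iffI)
      fix x assume "x \<in> T p 1 k {..<p}"
      then obtain L Y f where "x = (L,Y,f)" "(L,Y,f) \<in> T p 1 k {..<p}" by (cases x) auto
      then have x: "x = (L,Y,f)" and "(L,Y,f) \<in> T n 1 k {..<p}" using True by auto
      then have "L = {..<p} \<and> f = restrict (\<lambda>(l,j). l) ({..<p} \<times> {..<1::nat}) \<and> Y \<in> {..<p} \<rightarrow>\<^sub>E {..<k}"
        using fwd by blast
      then show "x \<in> (\<lambda>Y. ({..<p}, Y, restrict (\<lambda>(l,j). l) ({..<p} \<times> {..<1::nat}))) ` ({..<p} \<rightarrow>\<^sub>E {..<k})"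
        using x by blast
    next
      fix x assume "x \<in> (\<lambda>Y. ({..<p}, Y, restrict (\<lambda>(l,j). l) ({..<p} \<times> {..<1::nat}))) ` ({..<p} \<rightarrow>\<^sub>E {..<k})"
      then show "x \<in> T p 1 k {..<p}" using bwd by blast
    qed
    then show ?thesis using True by simp
  next
    case False
    have "T n 1 k {..<p} = {}"
    proof (rule ccontr)
      assume "T n 1 k {..<p} \<noteq> {}"
      then obtain L Y f where "(L,Y,f) \<in> T n 1 k {..<p}" by auto
      then show False using fwd False by blast
    qed
    then show ?thesis using False by simp
  qed
qed

lemma P_d1: "P p n 1 k = (if n = p then k ^ n else 0)"
proof -
  have "P p n 1 k = card (T n 1 k {..<p})" using P_T[of 1 p n k] by simp
  also have "\<dots> = (if n = p then card ({..<p} \<rightarrow>\<^sub>E {..<k}) else 0)"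
    unfolding T_d1 by (simp add: card_image inj_on_def)
  finally show ?thesis by (simp add: card_PiE)
qed

lemma P_p0: assumes "d \<ge> 1" "n \<ge> 1" shows "P 0 n d k = 0"
proof -
  have "T n d k {} = {}" unfolding T_def using assms by auto
  then show ?thesis using P_T[of d 0 n k] assms by simp
qed

theorem lemma9p1:
  fixes n d k p :: nat
  shows "(d = 0 \<and> n > k \<longrightarrow> P p n d k = 0) \<and>
         (n = 0 \<and> p = 0 \<longrightarrow> P p n d k = 1) \<and>
         (n = 0 \<and> p \<ge> 1 \<longrightarrow> P p n d k = 0) \<and>
         (d = 0 \<and> 1 \<le> n \<and> n \<le> k \<and> p = 0 \<longrightarrow> P p n d k = k choose n) \<and>
         (d = 0 \<and> 1 \<le> n \<and> n \<le> k \<and> p \<ge> 1 \<longrightarrow> P p n d k = 0) \<and>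
         (d = 1 \<and> n \<ge> 1 \<and> n = p \<longrightarrow> P p n d k = k ^ n) \<and>
         (d = 1 \<and> n \<ge> 1 \<and> n \<noteq> p \<longrightarrow> P p n d k = 0) \<and>
         (d \<ge> 2 \<and> n \<ge> 1 \<and> p = 0 \<longrightarrow> P p n d k = 0) \<and>
         (d \<ge> 2 \<and> n \<ge> 1 \<and> p \<ge> 1 \<longrightarrow>
            P p n d k = k * (\<Sum>j = 1..n. \<Sum>i = 0..p - 1.
               ((p - 1) choose i) * P i j (d - 1) 1 * P (p - 1 - i) (n - j) d k))"
  using P_d0[of p n k] P_n0[of p d k] P_d1[of p n k] P_p0[of d n k] P_rec[of d p n k]
  by (auto simp: binomial_eq_0)

end
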